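(* Let $\text{rank}[\mathbf{A}_{12}] = q$. Then the system $$\dot{\hat{\mathbf{z}}}_2(t) = [\mathbf{A}_{22} - \mathbf{L}\mathbf{A}_{12}]\hat{\mathbf{z}}_2(t) + \mathbf{L}\mathbf{y}_1(t) + \mathbf{D}\mathbf{u}_1(t) + \mathbf{F}\boldsymbol{\omega}(t), \qquad \dot{\boldsymbol{\omega}}(t) = \mathbf{G}[\mathbf{y}_1(t) - \mathbf{A}_{12}\hat{\mathbf{z}}_2(t)]$$ with $\text{rank}[\mathbf{G}] = k$ and $q \geq k$ is a reduced order proportional-integral observer for the system $\dot{\mathbf{x}}(t) = \mathbf{A}\mathbf{x}(t) + \mathbf{B}\mathbf{u}(t)$, $\mathbf{y}(t) = \mathbf{C}\mathbf{x}(t)$ if and only if the following condition holds: (a) The pair $(\mathbf{A}, \mathbf{C})$ is detectable.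
   Context: Consider the continuous-time LTI system $\dot{\mathbf{x}}(t) = \mathbf{A}\mathbf{x}(t) + \mathbf{B}\mathbf{u}(t)$, $\mathbf{y}(t) = \mathbf{C}\mathbf{x}(t)$ with real matrices $\mathbf{A}$ ($n\times n$), $\mathbf{B}$ ($n\times m$), $\mathbf{C}$ ($p\times n$), $\text{rank}[\mathbf{C}]=p$. Let $\mathbf{T}$ be a nonsingular real $n\times n$ matrix with $\mathbf{C}\mathbf{T}=[\mathbf{I}_p,\mathbf{0}]$, and write $\mathbf{T}^{-1}\mathbf{A}\mathbf{T} = \begin{bmatrix}\mathbf{A}_{11} & \mathbf{A}_{12}\\ \mathbf{A}_{21} & \mathbf{A}_{22}\end{bmatrix}$, $\mathbf{T}^{-1}\mathbf{B} = \begin{bmatrix}\mathbf{G}_1\\ \mathbf{G}_2\end{bmatrix}$, where $\mathbf{A}_{12}$ is $p\times(n-p)$ and $\mathbf{A}_{22}$ is $(n-p)\times(n-p)$; $\mathbf{z}=\mathbf{T}^{-1}\mathbf{x} = [\mathbf{z}_1;\mathbf{z}_2]$ with $\mathbf{z}_1=\mathbf{y}$ and $\mathbf{z}_2$ of size $(n-p)$. Define $\mathbf{u}_1(t)=[\mathbf{y}(t);\mathbf{u}(t)]$, $\mathbf{y}_1(t)=\dot{\mathbf{y}}(t)-\mathbf{A}_{11}\mathbf{y}(t)-\mathbf{G}_1\mathbf{u}(t)$, $\mathbf{D}=[\mathbf{A}_{21},\mathbf{G}_2]$, so that $\dot{\mathbf{z}}_2 = \mathbf{A}_{22}\mathbf{z}_2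 + \mathbf{D}\mathbf{u}_1$, $\mathbf{y}_1=\mathbf{A}_{12}\mathbf{z}_2$. In the observer, $\hat{\mathbf{z}}_2(t)$ has size $(n-p)$, $\boldsymbol{\omega}(t)$ has size $k$, and $\mathbf{L}$, $\mathbf{F}$, $\mathbf{G}$ are real matrices of size $(n-p)\times p$, $(n-p)\times k$, $k\times p$. The observer is called a reduced order proportional-integral observer if for arbitrary initial conditions and any input, $\hat{\mathbf{z}}_2(t)-\mathbf{z}_2(t)\to\mathbf{0}$ and $\boldsymbol{\omega}(t)\to\mathbf{0}$ as $t\to\infty$; equivalently, the matrix $\begin{bmatrix}\mathbf{A}_{22}-\mathbf{L}\mathbf{A}_{12} & \mathbf{F}\\ -\mathbf{G}\mathbf{A}_{12} & \mathbf{0}\end{bmatrix}$ is Hurwitz stable (all eigenvalues have negative real parts). The pair $(\mathbf{A},\mathbf{C})$ is detectable iff $\text{rank}\begin{bmatrix}\mathbf{C}\\ s\mathbf{I}_n-\mathbf{A}\end{bmatrix}=n$ for all complex $s$ with $\mathrm{Re}(s)\ge 0$. *)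

theory Defs
  imports "Jordan_Normal_Form.DL_Rank" "Jordan_Normal_Form.Char_Poly"
begin

abbreviation mrank :: "'a::field mat \<Rightarrow> nat" where
  "mrank M \<equiv> vec_space.rank (dim_row M) M"

abbreviation cmat :: "real mat \<Rightarrow> complex mat" where
  "cmat M \<equiv> map_mat complex_of_real M"

definition hurwitz :: "real mat \<Rightarrow> bool" where
  "hurwitz M \<longleftrightarrow> (\<forall>e::complex. eigenvalue (cmat M) e \<longrightarrow> Re e < 0)"

definition detectable :: "real mat \<Rightarrow> real mat \<Rightarrow> bool" where
  "detectable A C \<longleftrightarrow>
     (\<forall>s::complex. Re s \<ge> 0 \<longrightarrow>
        mrank (cmat C @\<^sub>r (s \<cdot>\<^sub>m 1\<^sub>m (dim_row A) - cmat A)) = dim_row A)"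

(* the reduced order PI observer with gains L, F, G (G of size k x p):
   error dynamics matrix [A22 - L A12, F; -G A12, 0] is Hurwitz *)
definition ro_pi_observer :: "real mat \<Rightarrow> real mat \<Rightarrow> real mat \<Rightarrow> real mat \<Rightarrow> real mat \<Rightarrow> bool" where
  "ro_pi_observer A12 A22 L F G \<longleftrightarrow>
     hurwitz (four_block_mat (A22 - L * A12) F (- (G * A12)) (0\<^sub>m (dim_row G) (dim_row G)))"

end

theory Submission
  imports Defs
begin

lemma cmat_carrier[simp]: "cmat A \<in> carrier_mat n m \<longleftrightarrow> A \<in> carrier_mat n m"
  unfolding carrier_mat_def by (simp only: mem_Collect_eq index_map_mat)

lemma cmat_mult: "A \<in> carrier_mat n m \<Longrightarrow> B \<in> carrier_mat m k \<Longrightarrow> cmat (A * B) = cmat A * cmat B"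
  by (rule of_real_hom.mat_hom_mult)

lemma cmat_one[simp]: "cmat (1\<^sub>m n) = 1\<^sub>m n"
  by (rule eq_matI, auto)

lemma cmv_index:
  assumes "A \<in> carrier_mat n m" "v \<in> carrier_vec m" "i < n"
  shows "(cmat A *\<^sub>v v) $ i = (\<Sum>j<m. complex_of_real (A $$ (i,j)) * v $ j)"
  using assms by (auto simp: scalar_prod_def lessThan_atLeast0 intro!: sum.cong)

lemma hurwitz_iff: "hurwitz M \<longleftrightarrow> (\<forall>e v. v \<in> carrier_vec (dim_row M) \<longrightarrow> v \<noteq> 0\<^sub>v (dim_row M)
   \<longrightarrow> cmat M *\<^sub>v v = e \<cdot>\<^sub>v v \<longrightarrow> Re e < 0)"
  unfolding hurwitz_def eigenvalue_def eigenvector_def by auto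

lemma hurwitz_sim:
  assumes R: "R \<in> carrier_mat n n" and S: "S \<in> carrier_mat n n" and M: "M \<in> carrier_mat n n"
    and SR: "S * R = 1\<^sub>m n" and h: "hurwitz (R * M * S)"
  shows "hurwitz M"
  unfolding hurwitz_iff
proof (intro allI impI)
  fix e v assume v: "v \<in> carrier_vec (dim_row M)" "v \<noteq> 0\<^sub>v (dim_row M)" "cmat M *\<^sub>v v = e \<cdot>\<^sub>v v"
  have vc: "v \<in> carrier_vec n" using v M by auto
  have cR: "cmat R \<in> carrier_mat n n" and cS: "cmat S \<in> carrier_mat n n" and cM: "cmat M \<in> carrier_mat n n"
    using R S M by auto
  define u where "u = cmat R *\<^sub>v v"
  have uc: "u \<in> carrier_vec n" unfolding u_def using cR vc by (rule mult_mat_vec_carrier)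
  have SRc: "cmat S * cmat R = 1\<^sub>m n" using cmat_mult[OF S R] SR by simp
  have "cmat S *\<^sub>v u = (cmat S * cmat R) *\<^sub>v v"
    unfolding u_def using assoc_mult_mat_vec[OF cS cR vc] by simp
  also have "\<dots> = v" unfolding SRc using vc by (rule one_mult_mat_vec)
  finally have Su: "cmat S *\<^sub>v u = v" .
  have u0: "u \<noteq> 0\<^sub>v n"
  proof
    assume "u = 0\<^sub>v n"
    hence "cmat S *\<^sub>v u = 0\<^sub>v n" using cS by auto
    thus False using Su v(2) M by simp
  qed
  have eq: "cmat (R * M * S) = cmat R * cmat M * cmat S"
    using cmat_mult[OF mult_carrier_mat[OF R M] S] cmat_mult[OF R M] by simp
  have "cmat (R * M * S) *\<^sub>v u = (cmat R * cmat M) *\<^sub>v (cmat S *\<^sub>v u)"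
    unfolding eq using assoc_mult_mat_vec[OF mult_carrier_mat[OF cR cM] cS uc] .
  also have "\<dots> = cmat R *\<^sub>v (cmat M *\<^sub>v v)" unfolding Su using assoc_mult_mat_vec[OF cR cM vc] .
  also have "\<dots> = e \<cdot>\<^sub>v u" unfolding v(3) u_def using mult_mat_vec[OF cR vc] .
  finally have "cmat (R * M * S) *\<^sub>v u = e \<cdot>\<^sub>v u" .
  moreover have "dim_row (R * M * S) = n" using R by simp
  ultimately show "Re e < 0" using h[unfolded hurwitz_iff, rule_format, of u e] uc u0 by simp
qed


lemma core_hurwitz:
  fixes H M :: "real mat" and a f :: "nat \<Rightarrow> real"
  assumes H: "H \<in> carrier_mat n n" and hH: "hurwitz H" and M: "M \<in> carrier_mat (Suc n) (Suc n)"
  and m00: "M $$ (0,0) = -1 - (\<Sum>j<n. a j * f j)"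
  and m0j: "\<And>j. j < n \<Longrightarrow> M $$ (0, Suc j) = a j"
  and mrj: "\<And>r j. r < n \<Longrightarrow> j < n \<Longrightarrow> M $$ (Suc r, Suc j) = H $$ (r,j) + f r * a j"
  and mr0: "\<And>r. r < n \<Longrightarrow> M $$ (Suc r, 0) = - f r - (\<Sum>j<n. (H $$ (r,j) + f r * a j) * f j)"
  shows "hurwitz M"
  unfolding hurwitz_iff
proof (intro allI impI)
  fix e v assume v: "v \<in> carrier_vec (dim_row M)" "v \<noteq> 0\<^sub>v (dim_row M)" "cmat M *\<^sub>v v = e \<cdot>\<^sub>v v"
  have dr: "dim_row M = Suc n" using M by simp
  have vc: "v \<in> carrier_vec (Suc n)" using v(1) dr by simp
  define w where "w = (\<lambda>j. v $ Suc j)"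
  define v0 where "v0 = v $ 0"
  define cf where "cf = (\<lambda>j. complex_of_real (f j))"
  define ca where "ca = (\<lambda>j. complex_of_real (a j))"
  define cH where "cH = (\<lambda>r j. complex_of_real (H $$ (r,j)))"
  define SAF where "SAF = (\<Sum>j<n. ca j * cf j)"
  define SA where "SA = (\<Sum>j<n. ca j * w j)"
  define SHF where "SHF = (\<lambda>r. \<Sum>j<n. cH r j * cf j)"
  define SHW where "SHW = (\<lambda>r. \<Sum>j<n. cH r j * w j)"
  have eqi: "(\<Sum>j<Suc n. complex_of_real (M $$ (i,j)) * v $ j) = e * v $ i" if "i < Suc n" for i
  proof -
    have "(cmat M *\<^sub>v v) $ i = (e \<cdot>\<^sub>v v) $ i" using v(3) by simp
    thus ?thesis using cmv_index[OF M vc that] vc that by simp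
  qed
  have s0: "(\<Sum>j<n. complex_of_real (M $$ (0, Suc j)) * v $ Suc j) = SA"
    unfolding SA_def by (rule sum.cong) (simp_all add: m0j w_def ca_def)
  have c00: "complex_of_real (M $$ (0,0)) = -1 - SAF"
    unfolding m00 SAF_def ca_def cf_def by (simp add: of_real_sum)
  have E0: "(-1 - SAF) * v0 + SA = e * v0"
    using eqi[of 0] unfolding sum.lessThan_Suc_shift s0 c00 v0_def by simp
  have Er: "(- cf r - SHF r - cf r * SAF) * v0 + (SHW r + cf r * SA) = e * w r" if r: "r < n" for r
  proof -
    have sr: "(\<Sum>j<n. complex_of_real (M $$ (Suc r, Suc j)) * v $ Suc j)
        = (\<Sum>j<n. cH r j * w j + cf r * (ca j * w j))"
      by (rule sum.cong) (simp_all add: mrj r w_def cH_def cf_def ca_def distrib_right)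
    also have "\<dots> = SHW r + cf r * SA"
      unfolding SHW_def SA_def by (simp add: sum.distrib sum_distrib_left)
    finally have sr': "(\<Sum>j<n. complex_of_real (M $$ (Suc r, Suc j)) * v $ Suc j) = SHW r + cf r * SA" .
    have "complex_of_real (M $$ (Suc r, 0))
        = - cf r - (\<Sum>j<n. cH r j * cf j + cf r * (ca j * cf j))"
      unfolding mr0[OF r] cf_def cH_def ca_def by (simp add: distrib_right mult.assoc)
    also have "\<dots> = - cf r - SHF r - cf r * SAF"
      unfolding SHF_def SAF_def by (simp add: sum.distrib sum_distrib_left)
    finally have c0: "complex_of_real (M $$ (Suc r, 0)) = - cf r - SHF r - cf r * SAF" .
    show ?thesis
      using eqi[of "Suc r"] r unfolding sum.lessThan_Suc_shift sr' c0 v0_def w_def by simp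
  qed
  define z where "z = vec n (\<lambda>r. w r - cf r * v0)"
  have zc: "z \<in> carrier_vec n" unfolding z_def by simp
  have Hz: "cmat H *\<^sub>v z = e \<cdot>\<^sub>v z"
  proof (rule eq_vecI)
    show "dim_vec (cmat H *\<^sub>v z) = dim_vec (e \<cdot>\<^sub>v z)" using H zc by simp
    fix r assume "r < dim_vec (e \<cdot>\<^sub>v z)"
    hence r: "r < n" using zc by simp
    have "(cmat H *\<^sub>v z) $ r = (\<Sum>j<n. complex_of_real (H$$(r,j)) * z $ j)"
      by (rule cmv_index[OF H zc r])
    also have "\<dots> = (\<Sum>j<n. cH r j * (w j - cf j * v0))"
      unfolding z_def cH_def by (rule sum.cong) simp_all
    also have "\<dots> = SHW r - SHF r * v0"
      unfolding SHW_def SHF_def by (simp add: right_diff_distrib sum_subtractf sum_distrib_right mult.assoc)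
    also have "\<dots> = e * (w r - cf r * v0)"
    proof -
      have SA: "SA = e * v0 - (-1 - SAF) * v0" using E0 by (metis add_diff_cancel_left')
      have id: "SHW r - SHF r * v0 - e * (w r - cf r * v0) =
        ((- cf r - SHF r - cf r * SAF) * v0 + (SHW r + cf r * (e * v0 - (-1 - SAF) * v0))) - e * w r"
        by (simp add: algebra_simps)
      have "SHW r - SHF r * v0 - e * (w r - cf r * v0) = 0"
        unfolding id using Er[OF r] unfolding SA by simp
      thus ?thesis by simp
    qed
    finally show "(cmat H *\<^sub>v z) $ r = (e \<cdot>\<^sub>v z) $ r" using r unfolding z_def by simp
  qed
  show "Re e < 0"
  proof (cases "z = 0\<^sub>v n")
    case False
    thus ?thesis using hH[unfolded hurwitz_iff, rule_format, of z e] zc Hz H by simp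
  next
    case True
    have wz: "w r = cf r * v0" if "r < n" for r
    proof -
      have "z $ r = 0" using True that by simp
      thus ?thesis using that unfolding z_def by simp
    qed
    have "SA = SAF * v0" unfolding SA_def SAF_def sum_distrib_right
      by (rule sum.cong) (simp_all add: wz)
    hence "- v0 = e * v0" using E0 by (simp add: algebra_simps)
    hence e1: "(e + 1) * v0 = 0" by (simp add: algebra_simps) (metis add.commute add.right_inverse)
    have "v0 \<noteq> 0"
    proof
      assume v00: "v0 = 0"
      have "v = 0\<^sub>v (Suc n)"
      proof (rule eq_vecI)
        show "dim_vec v = dim_vec (0\<^sub>v (Suc n))" using vc by simp
        fix i assume "i < dim_vec (0\<^sub>v (Suc n))"
        hence i: "i < Suc n" by simp
        show "v $ i = 0\<^sub>v (Suc n) $ i"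
        proof (cases i)
          case 0 thus ?thesis using v00 v0_def i by simp
        next
          case (Suc r) thus ?thesis using wz[of r] v00 i unfolding w_def by simp
        qed
      qed
      thus False using v(2) dr by simp
    qed
    hence "e + 1 = 0" using e1 by simp
    hence "e = -1" by (simp add: eq_neg_iff_add_eq_0)
    thus ?thesis by simp
  qed
qed


lemma mm_index:
  assumes "A \<in> carrier_mat n m" "B \<in> carrier_mat m k" "i < n" "j < k"
  shows "(A * B) $$ (i,j) = (\<Sum>l<m. A $$ (i,l) * B $$ (l,j))"
  using assms by (auto simp: scalar_prod_def lessThan_atLeast0 intro!: sum.cong)

definition pbh :: "real mat \<Rightarrow> real mat \<Rightarrow> bool" where
  "pbh A C \<longleftrightarrow> (\<forall>s v. 0 \<le> Re s \<longrightarrow> v \<in> carrier_vec (dim_col A) \<longrightarrow> cmat A *\<^sub>v v = s \<cdot>\<^sub>v v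
     \<longrightarrow> cmat C *\<^sub>v v = 0\<^sub>v (dim_row C) \<longrightarrow> v = 0\<^sub>v (dim_col A))"

lemma pbhD:
  assumes "pbh A C" "A \<in> carrier_mat n n" "C \<in> carrier_mat p n" "0 \<le> Re s" "v \<in> carrier_vec n"
    "cmat A *\<^sub>v v = s \<cdot>\<^sub>v v" "cmat C *\<^sub>v v = 0\<^sub>v p"
  shows "v = 0\<^sub>v n"
  using assms unfolding pbh_def by auto

lemma pbhI:
  assumes "A \<in> carrier_mat n n" "C \<in> carrier_mat p n"
    and "\<And>s v. 0 \<le> Re s \<Longrightarrow> v \<in> carrier_vec n \<Longrightarrow> cmat A *\<^sub>v v = s \<cdot>\<^sub>v v \<Longrightarrow> cmat C *\<^sub>v v = 0\<^sub>v p \<Longrightarrow> v = 0\<^sub>v n"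
  shows "pbh A C"
  using assms unfolding pbh_def by auto

lemma pbh_sim:
  assumes R: "R \<in> carrier_mat n n" and S: "S \<in> carrier_mat n n" and A: "A \<in> carrier_mat n n"
    and C: "C \<in> carrier_mat p n" and SR: "S * R = 1\<^sub>m n" and RS: "R * S = 1\<^sub>m n" and P: "pbh A C"
  shows "pbh (R * A * S) (C * S)"
proof (rule pbhI)
  show "R * A * S \<in> carrier_mat n n" using R A S by simp
  show "C * S \<in> carrier_mat p n" using C S by simp
  fix s v assume s: "0 \<le> Re s" and v: "v \<in> carrier_vec n" and ev: "cmat (R * A * S) *\<^sub>v v = s \<cdot>\<^sub>v v"
    and cv: "cmat (C * S) *\<^sub>v v = 0\<^sub>v p"
  have cR: "cmat R \<in> carrier_mat n n" and cS: "cmat S \<in> carrier_mat n n" and cA: "cmat A \<in> carrier_mat n n"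
    and cC: "cmat C \<in> carrier_mat p n"
    using R S A C by auto
  have SRc: "cmat S * cmat R = 1\<^sub>m n" using cmat_mult[OF S R] SR by simp
  have RSc: "cmat R * cmat S = 1\<^sub>m n" using cmat_mult[OF R S] RS by simp
  define u where "u = cmat S *\<^sub>v v"
  have uc: "u \<in> carrier_vec n" unfolding u_def using cS v by (rule mult_mat_vec_carrier)
  have eq: "cmat (R * A * S) = cmat R * cmat A * cmat S"
    using cmat_mult[OF mult_carrier_mat[OF R A] S] cmat_mult[OF R A] by simp
  have "cmat A *\<^sub>v u = (cmat S * cmat R) *\<^sub>v (cmat A *\<^sub>v u)"
    unfolding SRc using mult_mat_vec_carrier[OF cA uc] by simp
  also have "\<dots> = cmat S *\<^sub>v (cmat R *\<^sub>v (cmat A *\<^sub>v (cmat S *\<^sub>v v)))"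
    unfolding u_def using cS cR cA v by simp
  also have "\<dots> = cmat S *\<^sub>v (cmat (R * A * S) *\<^sub>v v)"
    unfolding eq by (simp only: assoc_mult_mat_vec[OF mult_carrier_mat[OF cR cA] cS v]
        assoc_mult_mat_vec[OF cR cA mult_mat_vec_carrier[OF cS v]])
  also have "\<dots> = s \<cdot>\<^sub>v u" unfolding ev u_def using mult_mat_vec[OF cS v] .
  finally have Au: "cmat A *\<^sub>v u = s \<cdot>\<^sub>v u" .
  have "cmat C *\<^sub>v u = cmat (C * S) *\<^sub>v v"
    unfolding u_def cmat_mult[OF C S] using cC cS v by simp
  hence Cu: "cmat C *\<^sub>v u = 0\<^sub>v p" using cv by simp
  have u0: "u = 0\<^sub>v n" by (rule pbhD[OF P A C s uc Au Cu])
  have "v = (cmat R * cmat S) *\<^sub>v v" unfolding RSc using v by simp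
  also have "\<dots> = cmat R *\<^sub>v u" unfolding u_def using cR cS v by simp
  also have "\<dots> = 0\<^sub>v n" unfolding u0 using cR by auto
  finally show "v = 0\<^sub>v n" .
qed


lemma obs_step:
  fixes A C :: "real mat"
  assumes A: "A \<in> carrier_mat (Suc n) (Suc n)" and C: "C \<in> carrier_mat p (Suc n)" and i0: "i0 < p"
    and rowC: "\<And>j. j < Suc n \<Longrightarrow> C $$ (i0, j) = (if j = 0 then 1 else 0)"
    and P: "pbh A C"
    and IH: "\<And>A' C' p'. A' \<in> carrier_mat n n \<Longrightarrow> C' \<in> carrier_mat p' n \<Longrightarrow> pbh A' C'
       \<Longrightarrow> \<exists>L. L \<in> carrier_mat n p' \<and> hurwitz (A' - L * C')"
  shows "\<exists>L. L \<in> carrier_mat (Suc n) p \<and> hurwitz (A - L * C)"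
proof -
  define A22 where "A22 = mat n n (\<lambda>(r,j). A $$ (Suc r, Suc j))"
  define Cs where "Cs = mat (Suc p) n (\<lambda>(k,j). if k = 0 then A $$ (0, Suc j) else C $$ (k - 1, Suc j))"
  have A22c: "A22 \<in> carrier_mat n n" unfolding A22_def by simp
  have Csc: "Cs \<in> carrier_mat (Suc p) n" unfolding Cs_def by simp
  have P2: "pbh A22 Cs"
  proof (rule pbhI[OF A22c Csc])
    fix s v' assume s: "0 \<le> Re s" and v': "v' \<in> carrier_vec n" and ev: "cmat A22 *\<^sub>v v' = s \<cdot>\<^sub>v v'"
      and cv: "cmat Cs *\<^sub>v v' = 0\<^sub>v (Suc p)"
    define v where "v = vec (Suc n) (\<lambda>i. if i = 0 then 0 else v' $ (i - 1))"
    have vc: "v \<in> carrier_vec (Suc n)" unfolding v_def by simp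
    have shift: "(cmat B *\<^sub>v v) $ i = (\<Sum>j<n. complex_of_real (B $$ (i, Suc j)) * v' $ j)"
      if B: "B \<in> carrier_mat m (Suc n)" and i: "i < m" for B m i
    proof -
      have "(cmat B *\<^sub>v v) $ i = (\<Sum>j<Suc n. complex_of_real (B $$ (i,j)) * v $ j)"
        by (rule cmv_index[OF B vc i])
      also have "\<dots> = (\<Sum>j<n. complex_of_real (B $$ (i,Suc j)) * v $ Suc j)"
        unfolding sum.lessThan_Suc_shift by (simp add: v_def)
      also have "\<dots> = (\<Sum>j<n. complex_of_real (B $$ (i, Suc j)) * v' $ j)"
        by (rule sum.cong) (simp_all add: v_def)
      finally show ?thesis .
    qed
    have Av: "cmat A *\<^sub>v v = s \<cdot>\<^sub>v v"
    proof (rule eq_vecI)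
      show "dim_vec (cmat A *\<^sub>v v) = dim_vec (s \<cdot>\<^sub>v v)" using A vc by simp
      fix i assume "i < dim_vec (s \<cdot>\<^sub>v v)"
      hence i: "i < Suc n" using vc by simp
      show "(cmat A *\<^sub>v v) $ i = (s \<cdot>\<^sub>v v) $ i"
      proof (cases i)
        case 0
        have "(cmat Cs *\<^sub>v v') $ 0 = (\<Sum>j<n. complex_of_real (Cs $$ (0, j)) * v' $ j)"
          by (rule cmv_index[OF Csc v']) simp
        also have "\<dots> = (\<Sum>j<n. complex_of_real (A $$ (0, Suc j)) * v' $ j)"
          unfolding Cs_def by (rule sum.cong) simp_all
        finally have "(\<Sum>j<n. complex_of_real (A $$ (0, Suc j)) * v' $ j) = 0" using cv by simp
        thus ?thesis using shift[OF A i] 0 vc unfolding v_def by simp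
      next
        case (Suc r)
        have r: "r < n" using i Suc by simp
        have "(cmat A22 *\<^sub>v v') $ r = (\<Sum>j<n. complex_of_real (A22 $$ (r, j)) * v' $ j)"
          by (rule cmv_index[OF A22c v' r])
        also have "\<dots> = (\<Sum>j<n. complex_of_real (A $$ (Suc r, Suc j)) * v' $ j)"
          unfolding A22_def by (rule sum.cong) (simp_all add: r)
        finally have "(\<Sum>j<n. complex_of_real (A $$ (Suc r, Suc j)) * v' $ j) = s * v' $ r"
          using ev r v' by simp
        thus ?thesis using shift[OF A i] Suc vc r unfolding v_def by simp
      qed
    qed
    have Cv: "cmat C *\<^sub>v v = 0\<^sub>v p"
    proof (rule eq_vecI)
      show "dim_vec (cmat C *\<^sub>v v) = dim_vec (0\<^sub>v p)" using C by simp
      fix k assume "k < dim_vec (0\<^sub>v p)"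
      hence k: "k < p" by simp
      have "(cmat Cs *\<^sub>v v') $ Suc k = (\<Sum>j<n. complex_of_real (Cs $$ (Suc k, j)) * v' $ j)"
        by (rule cmv_index[OF Csc v']) (simp add: k)
      also have "\<dots> = (\<Sum>j<n. complex_of_real (C $$ (k, Suc j)) * v' $ j)"
        unfolding Cs_def by (rule sum.cong) (simp_all add: k)
      finally have "(\<Sum>j<n. complex_of_real (C $$ (k, Suc j)) * v' $ j) = 0" using cv k by simp
      thus "(cmat C *\<^sub>v v) $ k = 0\<^sub>v p $ k" using shift[OF C k] k by simp
    qed
    have v0: "v = 0\<^sub>v (Suc n)" by (rule pbhD[OF P A C s vc Av Cv])
    show "v' = 0\<^sub>v n"
    proof (rule eq_vecI)
      show "dim_vec v' = dim_vec (0\<^sub>v n)" using v' by simp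
      fix r assume "r < dim_vec (0\<^sub>v n)"
      hence r: "r < n" by simp
      have "v $ Suc r = 0" using v0 r by simp
      thus "v' $ r = 0\<^sub>v n $ r" using r unfolding v_def by simp
    qed
  qed
  obtain L' where L': "L' \<in> carrier_mat n (Suc p)" and hH: "hurwitz (A22 - L' * Cs)"
    using IH[OF A22c Csc P2] by blast
  define H where "H = A22 - L' * Cs"
  have Hc: "H \<in> carrier_mat n n" unfolding H_def by (rule minus_carrier_mat[OF mult_carrier_mat[OF L' Csc]])
  define f where "f = (\<lambda>r. L' $$ (r, 0))"
  define a where "a = (\<lambda>j. A $$ (0, Suc j))"
  have Hrj: "H $$ (r,j) = A $$ (Suc r, Suc j) - f r * a j - (\<Sum>k<p. L' $$ (r, Suc k) * C $$ (k, Suc j))"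
    if r: "r < n" and j: "j < n" for r j
  proof -
    have "(L' * Cs) $$ (r,j) = (\<Sum>k<Suc p. L' $$ (r,k) * Cs $$ (k,j))"
      by (rule mm_index[OF L' Csc r j])
    also have "\<dots> = f r * a j + (\<Sum>k<p. L' $$ (r, Suc k) * C $$ (k, Suc j))"
      unfolding sum.lessThan_Suc_shift
      by (simp add: Cs_def f_def a_def j)
    finally show ?thesis unfolding H_def using r j A22c L' Csc by (simp add: A22_def)
  qed
  define g0 where "g0 = A $$ (0,0) + 1 + (\<Sum>j<n. a j * f j)"
  define gr where "gr = (\<lambda>r. A $$ (Suc r, 0) - (\<Sum>k<p. L' $$ (r, Suc k) * C $$ (k, 0)) + f r
      + (\<Sum>j<n. (H $$ (r,j) + f r * a j) * f j))"
  define L where "L = mat (Suc n) p (\<lambda>(i,k). if i = 0 then (if k = i0 then g0 else 0)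
      else L' $$ (i - 1, Suc k) + (if k = i0 then gr (i - 1) else 0))"
  have Lc: "L \<in> carrier_mat (Suc n) p" unfolding L_def by simp
  define M where "M = A - L * C"
  have Mc: "M \<in> carrier_mat (Suc n) (Suc n)" unfolding M_def by (rule minus_carrier_mat[OF mult_carrier_mat[OF Lc C]])
  have LC0: "(L * C) $$ (0, j) = g0 * C $$ (i0, j)" if j: "j < Suc n" for j
  proof -
    have "(L * C) $$ (0, j) = (\<Sum>k<p. L $$ (0,k) * C $$ (k,j))"
      by (rule mm_index[OF Lc C _ j]) simp
    also have "\<dots> = (\<Sum>k<p. if k = i0 then g0 * C $$ (k,j) else 0)"
      unfolding L_def by (rule sum.cong) simp_all
    also have "\<dots> = g0 * C $$ (i0, j)" using i0 by simp
    finally show ?thesis .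
  qed
  have LCr: "(L * C) $$ (Suc r, j) = (\<Sum>k<p. L' $$ (r, Suc k) * C $$ (k, j)) + gr r * C $$ (i0, j)"
    if r: "r < n" and j: "j < Suc n" for r j
  proof -
    have "(L * C) $$ (Suc r, j) = (\<Sum>k<p. L $$ (Suc r,k) * C $$ (k,j))"
      by (rule mm_index[OF Lc C _ j]) (simp add: r)
    also have "\<dots> = (\<Sum>k<p. L' $$ (r, Suc k) * C $$ (k, j) + (if k = i0 then gr r * C $$ (k,j) else 0))"
      unfolding L_def by (rule sum.cong) (simp_all add: r distrib_right)
    also have "\<dots> = (\<Sum>k<p. L' $$ (r, Suc k) * C $$ (k, j)) + gr r * C $$ (i0, j)"
      using i0 by (simp add: sum.distrib)
    finally show ?thesis .
  qed
  have Mij: "M $$ (i,j) = A $$ (i,j) - (L * C) $$ (i,j)" if "i < Suc n" "j < Suc n" for i j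
    unfolding M_def using that A Lc C by simp
  have "hurwitz M"
  proof (rule core_hurwitz[OF Hc hH[folded H_def] Mc])
    show "M $$ (0, 0) = - 1 - (\<Sum>j<n. a j * f j)"
      using Mij[of 0 0] LC0[of 0] rowC[of 0] unfolding g0_def by simp
    show "M $$ (0, Suc j) = a j" if j: "j < n" for j
      using Mij[of 0 "Suc j"] LC0[of "Suc j"] rowC[of "Suc j"] j unfolding a_def by simp
    show "M $$ (Suc r, Suc j) = H $$ (r, j) + f r * a j" if r: "r < n" and j: "j < n" for r j
      using Mij[of "Suc r" "Suc j"] LCr[of r "Suc j"] rowC[of "Suc j"] Hrj[OF r j] r j by simp
    show "M $$ (Suc r, 0) = - f r - (\<Sum>j<n. (H $$ (r, j) + f r * a j) * f j)" if r: "r < n" for r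
      using Mij[of "Suc r" 0] LCr[of r 0] rowC[of 0] r unfolding gr_def by simp
  qed
  thus ?thesis using Lc unfolding M_def by blast
qed


lemma perm_exists:
  fixes C :: "real mat"
  assumes C: "C \<in> carrier_mat p N" and j0: "j0 < N" and i0: "i0 < p"
  shows "\<exists>P. P \<in> carrier_mat N N \<and> P * P = 1\<^sub>m N \<and> (C * P) $$ (i0, 0) = C $$ (i0, j0)"
proof -
  define \<tau> where "\<tau> = (\<lambda>x::nat. if x = 0 then j0 else if x = j0 then 0 else x)"
  have tt: "\<tau> (\<tau> x) = x" for x unfolding \<tau>_def by auto
  have tN: "x < N \<Longrightarrow> \<tau> x < N" for x unfolding \<tau>_def using j0 by auto
  have t0: "(0 = \<tau> l) \<longleftrightarrow> l = j0" for l unfolding \<tau>_def by auto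
  define P :: "real mat" where "P = mat N N (\<lambda>(a,b). if b = \<tau> a then 1 else 0)"
  have Pc: "P \<in> carrier_mat N N" unfolding P_def by simp
  have N0: "0 < N" using j0 by simp
  have PP: "P * P = 1\<^sub>m N"
  proof (rule eq_matI)
    fix a b assume "a < dim_row (1\<^sub>m N :: real mat)" "b < dim_col (1\<^sub>m N :: real mat)"
    hence a: "a < N" and b: "b < N" by auto
    have "(P * P) $$ (a,b) = (\<Sum>l<N. P $$ (a,l) * P $$ (l,b))" by (rule mm_index[OF Pc Pc a b])
    also have "\<dots> = (\<Sum>l<N. if l = \<tau> a then (if b = \<tau> l then 1 else 0) else 0)"
      unfolding P_def by (rule sum.cong) (auto simp: a b)
    also have "\<dots> = (if b = \<tau> (\<tau> a) then 1 else 0)" using tN[OF a] by simp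
    also have "\<dots> = 1\<^sub>m N $$ (a,b)" using a b tt by simp
    finally show "(P * P) $$ (a,b) = 1\<^sub>m N $$ (a,b)" .
  qed (simp_all add: P_def)
  have "(C * P) $$ (i0, 0) = (\<Sum>l<N. C $$ (i0,l) * P $$ (l,0))" by (rule mm_index[OF C Pc i0 N0])
  also have "\<dots> = (\<Sum>l<N. if l = j0 then C $$ (i0,l) else 0)"
    unfolding P_def by (rule sum.cong) (auto simp: N0 t0)
  also have "\<dots> = C $$ (i0, j0)" using j0 by simp
  finally show ?thesis using Pc PP by blast
qed

lemma shear_exists:
  fixes C :: "real mat"
  assumes C: "C \<in> carrier_mat p (Suc n)" and i0: "i0 < p" and c0: "C $$ (i0, 0) \<noteq> 0"
  shows "\<exists>R S. R \<in> carrier_mat (Suc n) (Suc n) \<and> S \<in> carrier_mat (Suc n) (Suc n) \<and> S * R = 1\<^sub>m (Suc n)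
     \<and> R * S = 1\<^sub>m (Suc n) \<and> (\<forall>j < Suc n. (C * S) $$ (i0, j) = (if j = 0 then 1 else 0))"
proof -
  define c where "c = (\<lambda>b. C $$ (i0, b))"
  have c00: "c 0 \<noteq> 0" using c0 c_def by simp
  define R :: "real mat" where "R = mat (Suc n) (Suc n) (\<lambda>(a,b). if a = 0 then c b else (if a = b then 1 else 0))"
  define S :: "real mat" where "S = mat (Suc n) (Suc n) (\<lambda>(a,b). if a = 0 then (if b = 0 then 1 / c 0 else - c b / c 0)
      else (if a = b then 1 else 0))"
  have Rc: "R \<in> carrier_mat (Suc n) (Suc n)" unfolding R_def by simp
  have Sc: "S \<in> carrier_mat (Suc n) (Suc n)" unfolding S_def by simp
  have key: "(\<Sum>l<(Suc n). c l * S $$ (l,b)) = (if b = 0 then 1 else 0)" if b: "b < (Suc n)" for b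
  proof -
    have bS: "b < Suc n" using b by simp
    have "(\<Sum>l<(Suc n). c l * S $$ (l,b)) = c 0 * S $$ (0,b) + (\<Sum>l<n. c (Suc l) * S $$ (Suc l, b))"
      unfolding sum.lessThan_Suc_shift ..
    also have "(\<Sum>l<n. c (Suc l) * S $$ (Suc l, b)) = (\<Sum>l<n. if Suc l = b then c b else 0)"
      unfolding S_def by (rule sum.cong) (auto simp: bS)
    also have "\<dots> = (if b = 0 then 0 else c b)"
      using b by (cases b) (auto simp: sum.delta)
    finally show ?thesis using b c00 unfolding S_def by auto
  qed
  have RS: "R * S = 1\<^sub>m (Suc n)"
  proof (rule eq_matI)
    fix a b assume "a < dim_row (1\<^sub>m (Suc n) :: real mat)" "b < dim_col (1\<^sub>m (Suc n) :: real mat)"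
    hence a: "a < (Suc n)" and b: "b < (Suc n)" by auto
    have "(R * S) $$ (a,b) = (\<Sum>l<(Suc n). R $$ (a,l) * S $$ (l,b))" by (rule mm_index[OF Rc Sc a b])
    also have "\<dots> = 1\<^sub>m (Suc n) $$ (a,b)"
    proof (cases "a = 0")
      case True
      have "(\<Sum>l<(Suc n). R $$ (a,l) * S $$ (l,b)) = (\<Sum>l<(Suc n). c l * S $$ (l,b))"
        unfolding R_def by (rule sum.cong) (auto simp: True)
      thus ?thesis using key[OF b] True a b by simp
    next
      case False
      have "(\<Sum>l<(Suc n). R $$ (a,l) * S $$ (l,b)) = (\<Sum>l<(Suc n). if l = a then S $$ (a,b) else 0)"
        unfolding R_def by (rule sum.cong) (auto simp: False a)
      also have "\<dots> = S $$ (a,b)" using a by simp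
      finally show ?thesis using False a b unfolding S_def by simp
    qed
    finally show "(R * S) $$ (a,b) = 1\<^sub>m (Suc n) $$ (a,b)" .
  qed (simp_all add: R_def S_def)
  have SR: "S * R = 1\<^sub>m (Suc n)"
  proof (rule eq_matI)
    fix a b assume "a < dim_row (1\<^sub>m (Suc n) :: real mat)" "b < dim_col (1\<^sub>m (Suc n) :: real mat)"
    hence a: "a < (Suc n)" and b: "b < (Suc n)" by auto
    have bS: "b < Suc n" using b by simp
    have "(S * R) $$ (a,b) = (\<Sum>l<(Suc n). S $$ (a,l) * R $$ (l,b))" by (rule mm_index[OF Sc Rc a b])
    also have "\<dots> = 1\<^sub>m (Suc n) $$ (a,b)"
    proof (cases "a = 0")
      case True
      have "(\<Sum>l<(Suc n). S $$ (a,l) * R $$ (l,b)) = S $$ (0,0) * R $$ (0,b) + (\<Sum>l<n. S $$ (0, Suc l) * R $$ (Suc l, b))"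
        unfolding sum.lessThan_Suc_shift True ..
      also have "(\<Sum>l<n. S $$ (0, Suc l) * R $$ (Suc l, b)) = (\<Sum>l<n. if Suc l = b then - c b / c 0 else 0)"
        unfolding S_def R_def by (rule sum.cong) (auto simp: bS)
      also have "\<dots> = (if b = 0 then 0 else - c b / c 0)"
        using b by (cases b) (auto simp: sum.delta)
      finally show ?thesis using True a b c00 unfolding S_def R_def by auto
    next
      case False
      have "(\<Sum>l<(Suc n). S $$ (a,l) * R $$ (l,b)) = (\<Sum>l<(Suc n). if l = a then R $$ (a,b) else 0)"
        unfolding S_def by (rule sum.cong) (auto simp: False a)
      also have "\<dots> = R $$ (a,b)" using a by simp
      finally show ?thesis using False a b unfolding R_def by simp
    qed
    finally show "(S * R) $$ (a,b) = 1\<^sub>m (Suc n) $$ (a,b)" .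
  qed (simp_all add: R_def S_def)
  have CS: "(C * S) $$ (i0, j) = (if j = 0 then 1 else 0)" if j: "j < (Suc n)" for j
  proof -
    have "(C * S) $$ (i0, j) = (\<Sum>l<(Suc n). C $$ (i0,l) * S $$ (l,j))"
      by (rule mm_index[OF C Sc i0 j])
    thus ?thesis using key[OF j] unfolding c_def by simp
  qed
  show ?thesis using Rc Sc RS SR CS by blast
qed


lemma hurwitz_dim0: "M \<in> carrier_mat 0 0 \<Longrightarrow> hurwitz M"
  unfolding hurwitz_iff
proof (intro allI impI)
  fix e v assume M: "M \<in> carrier_mat 0 0" and v: "v \<in> carrier_vec (dim_row M)" "v \<noteq> 0\<^sub>v (dim_row M)"
  have "v = 0\<^sub>v 0" using v(1) M by (intro eq_vecI) auto
  thus "Re e < 0" using v(2) M by simp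
qed

lemma obs_exists:
  "A \<in> carrier_mat n n \<Longrightarrow> C \<in> carrier_mat p n \<Longrightarrow> pbh A C \<Longrightarrow> \<exists>L. L \<in> carrier_mat n p \<and> hurwitz (A - L * C)"
proof (induction n arbitrary: A C p)
  case 0
  have "0\<^sub>m 0 p \<in> carrier_mat 0 p" by simp
  moreover have "A - 0\<^sub>m 0 p * C \<in> carrier_mat 0 0"
    by (rule minus_carrier_mat[OF mult_carrier_mat[OF _ "0.prems"(2)]]) simp
  ultimately show ?case using hurwitz_dim0 by blast
next
  case (Suc n)
  note A = Suc.prems(1) and C = Suc.prems(2) and P = Suc.prems(3)
  show ?case
  proof (cases "\<exists>i0 j0. i0 < p \<and> j0 < Suc n \<and> C $$ (i0, j0) \<noteq> 0")
    case False
    define L :: "real mat" where "L = 0\<^sub>m (Suc n) p"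
    have Lc: "L \<in> carrier_mat (Suc n) p" unfolding L_def by simp
    have Mc: "A - L * C \<in> carrier_mat (Suc n) (Suc n)"
      by (rule minus_carrier_mat[OF mult_carrier_mat[OF Lc C]])
    have hA: "hurwitz (A - L * C)"
      unfolding hurwitz_iff
    proof (intro allI impI)
      fix e v assume v: "v \<in> carrier_vec (dim_row (A - L * C))" "v \<noteq> 0\<^sub>v (dim_row (A - L * C))"
        "cmat (A - L * C) *\<^sub>v v = e \<cdot>\<^sub>v v"
      have vc: "v \<in> carrier_vec (Suc n)" using v(1) Lc by simp
      have LC: "L * C = 0\<^sub>m (Suc n) (Suc n)" unfolding L_def using C by (simp add: left_mult_zero_mat)
      have AM: "A - L * C = A" unfolding LC using A by (intro eq_matI) auto
      show "Re e < 0"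
      proof (rule ccontr)
        assume "\<not> Re e < 0"
        hence s: "0 \<le> Re e" by simp
        have Av: "cmat A *\<^sub>v v = e \<cdot>\<^sub>v v" using v(3) unfolding AM .
        have Cv: "cmat C *\<^sub>v v = 0\<^sub>v p"
        proof (rule eq_vecI)
          fix i assume "i < dim_vec (0\<^sub>v p)"
          hence i: "i < p" by simp
          have "(cmat C *\<^sub>v v) $ i = (\<Sum>j<Suc n. complex_of_real (C $$ (i,j)) * v $ j)"
            by (rule cmv_index[OF C vc i])
          also have "\<dots> = 0" using False i by (intro sum.neutral) auto
          finally show "(cmat C *\<^sub>v v) $ i = 0\<^sub>v p $ i" using i by simp
        qed (use C in simp)
        have "v = 0\<^sub>v (Suc n)" by (rule pbhD[OF P A C s vc Av Cv])
        thus False using v(2) Lc by simp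
      qed
    qed
    show ?thesis using Lc hA by blast
  next
    case True
    then obtain i0 j0 where i0: "i0 < p" and j0: "j0 < Suc n" and cij: "C $$ (i0, j0) \<noteq> 0" by blast
    obtain P1 where P1: "P1 \<in> carrier_mat (Suc n) (Suc n)" and PP: "P1 * P1 = 1\<^sub>m (Suc n)"
      and CP: "(C * P1) $$ (i0, 0) = C $$ (i0, j0)"
      using perm_exists[OF C j0 i0] by blast
    have CPc: "C * P1 \<in> carrier_mat p (Suc n)" using C P1 by simp
    obtain Rs Ss where Rs: "Rs \<in> carrier_mat (Suc n) (Suc n)" and Ss: "Ss \<in> carrier_mat (Suc n) (Suc n)"
      and SRs: "Ss * Rs = 1\<^sub>m (Suc n)" and RSs: "Rs * Ss = 1\<^sub>m (Suc n)"
      and row: "\<forall>j < Suc n. ((C * P1) * Ss) $$ (i0, j) = (if j = 0 then 1 else 0)"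
      using shear_exists[OF CPc i0] CP cij by metis
    define R where "R = Rs * P1"
    define S where "S = P1 * Ss"
    have Rc: "R \<in> carrier_mat (Suc n) (Suc n)" unfolding R_def using Rs P1 by simp
    have Sc: "S \<in> carrier_mat (Suc n) (Suc n)" unfolding S_def using Ss P1 by simp
    have SR: "S * R = 1\<^sub>m (Suc n)"
    proof -
      have "S * R = P1 * (Ss * (Rs * P1))" unfolding S_def R_def
        by (rule assoc_mult_mat[OF P1 Ss mult_carrier_mat[OF Rs P1]])
      also have "Ss * (Rs * P1) = (Ss * Rs) * P1" by (rule assoc_mult_mat[OF Ss Rs P1, symmetric])
      also have "\<dots> = P1" unfolding SRs using P1 by simp
      finally show ?thesis using PP by simp
    qed
    have RS: "R * S = 1\<^sub>m (Suc n)"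
    proof -
      have "R * S = Rs * (P1 * (P1 * Ss))" unfolding S_def R_def
        by (rule assoc_mult_mat[OF Rs P1 mult_carrier_mat[OF P1 Ss]])
      also have "P1 * (P1 * Ss) = (P1 * P1) * Ss" by (rule assoc_mult_mat[OF P1 P1 Ss, symmetric])
      also have "\<dots> = Ss" unfolding PP using Ss by simp
      finally show ?thesis using RSs by simp
    qed
    have CSrow: "\<And>j. j < Suc n \<Longrightarrow> (C * S) $$ (i0, j) = (if j = 0 then 1 else 0)"
      using row unfolding S_def assoc_mult_mat[OF C P1 Ss] by simp
    have A'c: "R * A * S \<in> carrier_mat (Suc n) (Suc n)" using Rc A Sc by simp
    have C'c: "C * S \<in> carrier_mat p (Suc n)" using C Sc by simp
    have P': "pbh (R * A * S) (C * S)" by (rule pbh_sim[OF Rc Sc A C SR RS P])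
    obtain L where Lc: "L \<in> carrier_mat (Suc n) p" and hL: "hurwitz (R * A * S - L * (C * S))"
      using obs_step[OF A'c C'c i0 CSrow P' Suc.IH] by blast
    define L2 where "L2 = S * L"
    have L2c: "L2 \<in> carrier_mat (Suc n) p" unfolding L2_def using Sc Lc by simp
    have LCc: "L2 * C \<in> carrier_mat (Suc n) (Suc n)" using L2c C by simp
    have eq: "R * (A - L2 * C) * S = R * A * S - L * (C * S)"
    proof -
      have "R * (A - L2 * C) * S = (R * A - R * (L2 * C)) * S"
        using mult_minus_distrib_mat[OF Rc A LCc] by simp
      also have "\<dots> = R * A * S - R * (L2 * C) * S"
        by (rule minus_mult_distrib_mat[OF mult_carrier_mat[OF Rc A] mult_carrier_mat[OF Rc LCc] Sc])
      also have "R * (L2 * C) * S = L * (C * S)"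
      proof -
        have LC: "L * C \<in> carrier_mat (Suc n) (Suc n)" using Lc C by simp
        have "L2 * C = S * (L * C)" unfolding L2_def by (rule assoc_mult_mat[OF Sc Lc C])
        hence "R * (L2 * C) = (R * S) * (L * C)" using assoc_mult_mat[OF Rc Sc LC] by simp
        hence "R * (L2 * C) = L * C" unfolding RS using left_mult_one_mat[OF LC] by simp
        thus ?thesis using assoc_mult_mat[OF Lc C Sc] by simp
      qed
      finally show ?thesis .
    qed
    have "hurwitz (A - L2 * C)"
      by (rule hurwitz_sim[OF Rc Sc minus_carrier_mat[OF LCc] SR]) (use hL eq in simp)
    thus ?thesis using L2c by blast
  qed
qed


lemma mv_index:
  assumes "A \<in> carrier_mat n m" "v \<in> carrier_vec m" "i < n"
  shows "(A *\<^sub>v v) $ i = (\<Sum>j<m. A $$ (i,j) * v $ j)"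
  using assms by (auto simp: scalar_prod_def lessThan_atLeast0 intro!: sum.cong)

context vec_space
begin

lemma exists_maximal_indpt:
  fixes A :: "'a mat"
  assumes A: "A \<in> carrier_mat n nc"
  obtains S where "maximal S (\<lambda>T. T \<subseteq> set (cols A) \<and> lin_indpt T)"
  using maximal_exists[of "(\<lambda>T. T \<subseteq> set (cols A) \<and> lin_indpt T)" "card (set (cols A))" "{}"]
  by (meson List.finite_set card_mono empty_iff empty_subsetI finite_lin_indpt2 rev_finite_subset)

lemma non_distinct_rank_lt:
  fixes A :: "'a mat"
  assumes A: "A \<in> carrier_mat n nc" and nd: "\<not> distinct (cols A)"
  shows "rank A < nc"
proof -
  obtain S where S: "maximal S (\<lambda>T. T \<subseteq> set (cols A) \<and> lin_indpt T)"
    using exists_maximal_indpt[OF A] by blast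
  have "card S \<le> card (set (cols A))" using S by (simp add: card_mono maximal_def)
  moreover have "card (set (cols A)) < length (cols A)"
    using nd card_distinct[of "cols A"] card_length[of "cols A"] by linarith
  moreover have "length (cols A) = nc" using A by simp
  ultimately show ?thesis using rank_card_indpt[OF A S] by simp
qed

lemma rank_eq_nc_kernel:
  fixes A :: "'a mat" and v :: "'a vec"
  assumes A: "A \<in> carrier_mat n nc" and r: "rank A = nc" and v: "v \<in> carrier_vec nc"
    and Av: "A *\<^sub>v v = 0\<^sub>v n"
  shows "v = 0\<^sub>v nc"
proof (rule ccontr)
  assume v0: "v \<noteq> 0\<^sub>v nc"
  have d: "distinct (cols A)" using non_distinct_rank_lt[OF A] r by auto
  have "lin_indpt (set (cols A))" by (rule full_rank_lin_indpt[OF A r d])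
  moreover have "lin_dep (set (cols A))" by (rule lin_depI[OF A v v0 Av d])
  ultimately show False by simp
qed

lemma kernel_rank_eq_nc:
  fixes A :: "'a mat"
  assumes A: "A \<in> carrier_mat n nc"
    and k: "\<And>v::'a vec. v \<in> carrier_vec nc \<Longrightarrow> A *\<^sub>v v = 0\<^sub>v n \<Longrightarrow> v = 0\<^sub>v nc"
  shows "rank A = nc"
proof -
  have d: "distinct (cols A)"
  proof (rule ccontr)
    assume "\<not> distinct (cols A)"
    then obtain i j where ij: "i \<noteq> j" "cols A ! i = cols A ! j" "i < length (cols A)" "j < length (cols A)"
      using distinct_conv_nth by blast
    hence i: "i < nc" and j: "j < nc" using A by auto
    have cij: "col A i = col A j" using ij i j A by simp
    define v :: "'a vec" where "v = unit_vec nc i - unit_vec nc j"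
    have vc: "v \<in> carrier_vec nc" unfolding v_def by simp
    have "A *\<^sub>v v = 0\<^sub>v n"
    proof (rule eq_vecI)
      fix r assume "r < dim_vec (0\<^sub>v n)"
      hence r: "r < n" by simp
      have "(A *\<^sub>v v) $ r = (\<Sum>l<nc. A $$ (r,l) * v $ l)" by (rule mv_index[OF A vc r])
      also have "\<dots> = (\<Sum>l<nc. (if l = i then A $$ (r,l) else 0) - (if l = j then A $$ (r,l) else 0))"
        by (rule sum.cong) (auto simp: v_def i j)
      also have "\<dots> = A $$ (r,i) - A $$ (r,j)" using i j by (simp add: sum_subtractf)
      also have "A $$ (r,i) = A $$ (r,j)"
      proof -
        have "col A i $ r = col A j $ r" using cij by simp
        thus ?thesis using r A i j by simp
      qed
      finally show "(A *\<^sub>v v) $ r = 0\<^sub>v n $ r" using r by simp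
    qed (use A in simp)
    moreover have "v \<noteq> 0\<^sub>v nc"
    proof
      assume "v = 0\<^sub>v nc"
      hence "v $ i = 0" using i by simp
      thus False unfolding v_def using i j ij(1) by simp
    qed
    ultimately show False using k vc by blast
  qed
  have "lin_indpt (set (cols A))"
  proof
    assume "lin_dep (set (cols A))"
    then obtain v where "v \<in> carrier_vec nc" "v \<noteq> 0\<^sub>v nc" "A *\<^sub>v v = 0\<^sub>v n"
      using lin_depE[OF A _ d] by blast
    thus False using k by blast
  qed
  thus ?thesis using lin_indpt_full_rank[OF A d] by blast
qed

lemma indep_cols_exist:
  fixes A :: "'a mat"
  assumes A: "A \<in> carrier_mat n nc" and k: "k \<le> rank A"
  shows "\<exists>Y. Y \<in> carrier_mat nc k \<and> (\<forall>w. w \<in> carrier_vec k \<longrightarrow> (A * Y) *\<^sub>v w = 0\<^sub>v n \<longrightarrow> w = 0\<^sub>v k)"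
proof -
  obtain S where S: "maximal S (\<lambda>T. T \<subseteq> set (cols A) \<and> lin_indpt T)"
    using exists_maximal_indpt[OF A] by blast
  have cS: "card S = rank A" using rank_card_indpt[OF A S] by simp
  have SS: "S \<subseteq> set (cols A)" "lin_indpt S" using S unfolding maximal_def by auto
  obtain T where T: "T \<subseteq> S" "card T = k" "finite T"
    using obtain_subset_with_card_n[of k S] k cS by metis
  have liT: "lin_indpt T" by (rule subset_li_is_li[OF SS(2) T(1)])
  obtain xs where xs: "set xs = T" "distinct xs" using finite_distinct_list[OF T(3)] by blast
  have lxs: "length xs = k" using xs T(2) distinct_card by fastforce
  have xsA: "\<forall>i<k. \<exists>j. j < nc \<and> xs ! i = col A j"
  proof (intro allI impI)
    fix i assume "i < k"
    hence "xs ! i \<in> set (cols A)" using xs lxs T(1) SS(1) nth_mem by blast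
    then obtain j where "j < length (cols A)" "xs ! i = cols A ! j" by (metis in_set_conv_nth)
    thus "\<exists>j. j < nc \<and> xs ! i = col A j" using A by auto
  qed
  then obtain idx where idx: "\<And>i. i < k \<Longrightarrow> idx i < nc \<and> xs ! i = col A (idx i)" by metis
  define Y :: "'a mat" where "Y = mat nc k (\<lambda>(r,i). if r = idx i then 1 else 0)"
  have Yc: "Y \<in> carrier_mat nc k" unfolding Y_def by simp
  have xsc: "set xs \<subseteq> carrier_vec n"
  proof
    fix x assume "x \<in> set xs"
    then obtain i where i: "i < k" "x = xs ! i" using lxs by (metis in_set_conv_nth)
    have "dim_vec (col A (idx i)) = n" using A by simp
    thus "x \<in> carrier_vec n" using idx[OF i(1)] i(2) unfolding carrier_vec_def by simp
  qed
  have AY: "A * Y = mat_of_cols n xs"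
  proof (rule eq_matI)
    fix a i assume "a < dim_row (mat_of_cols n xs)" "i < dim_col (mat_of_cols n xs)"
    hence a: "a < n" and i: "i < k" using lxs by auto
    have "(A * Y) $$ (a,i) = (\<Sum>r<nc. A $$ (a,r) * Y $$ (r,i))" by (rule mm_index[OF A Yc a i])
    also have "\<dots> = (\<Sum>r<nc. if r = idx i then A $$ (a,r) else 0)"
      unfolding Y_def by (rule sum.cong) (auto simp: i)
    also have "\<dots> = A $$ (a, idx i)" using idx[OF i] by simp
    also have "\<dots> = col A (idx i) $ a" using idx[OF i] A a by simp
    also have "\<dots> = xs ! i $ a" using idx[OF i] by simp
    also have "\<dots> = mat_of_cols n xs $$ (a,i)" unfolding mat_of_cols_def using a i lxs by simp
    finally show "(A * Y) $$ (a,i) = mat_of_cols n xs $$ (a,i)" .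
  qed (use A Yc lxs in auto)
  have Mc: "mat_of_cols n xs \<in> carrier_mat n k" using lxs by (metis mat_of_cols_carrier(1))
  have dc: "distinct (cols (mat_of_cols n xs))" using xs(2) cols_mat_of_cols[OF xsc] by simp
  have "w = 0\<^sub>v k" if w: "w \<in> carrier_vec k" and Aw: "(A * Y) *\<^sub>v w = 0\<^sub>v n" for w
  proof (rule ccontr)
    assume w0: "w \<noteq> 0\<^sub>v k"
    have "lin_dep (set (cols (mat_of_cols n xs)))"
      by (rule lin_depI[OF Mc w w0 Aw[unfolded AY] dc])
    hence "lin_dep T" using cols_mat_of_cols[OF xsc] xs(1) by simp
    thus False using liT by simp
  qed
  thus ?thesis using Yc by blast
qed

lemma right_inv_rank:
  fixes G X :: "'a mat"
  assumes G: "G \<in> carrier_mat n p" and X: "X \<in> carrier_mat p n" and GX: "G * X = 1\<^sub>m n"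
  shows "rank G = n"
proof -
  have cs: "col_space G = carrier_vec n"
  proof
    show "col_space G \<subseteq> carrier_vec n" using col_space_eq[OF G] G by auto
    show "carrier_vec n \<subseteq> col_space G"
    proof
      fix y :: "'a vec" assume y: "y \<in> carrier_vec n"
      have "G *\<^sub>v (X *\<^sub>v y) = (G * X) *\<^sub>v y" using assoc_mult_mat_vec[OF G X y] by simp
      also have "\<dots> = y" unfolding GX using y by simp
      finally have "G *\<^sub>v (X *\<^sub>v y) = y" .
      moreover have "X *\<^sub>v y \<in> carrier_vec (dim_col G)" using X y G by simp
      ultimately show "y \<in> col_space G" unfolding col_space_eq[OF G] using y G by blast
    qed
  qed
  have "span (set (cols G)) = carrier V" using cs unfolding col_space_def by simp
  hence "span_vs (set (cols G)) = V" by simp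
  thus ?thesis unfolding rank_def using dim_is_n by simp
qed

end

lemma cmat_cvec: "A \<in> carrier_mat nr n \<Longrightarrow> v \<in> carrier_vec n \<Longrightarrow>
  cmat A *\<^sub>v map_vec complex_of_real v = map_vec complex_of_real (A *\<^sub>v v)"
  using of_real_hom.mult_mat_vec_hom by metis

lemma hurwitz_inj:
  assumes M: "M \<in> carrier_mat N N" and h: "hurwitz M" and v: "v \<in> carrier_vec N" and Mv: "M *\<^sub>v v = 0\<^sub>v N"
  shows "v = 0\<^sub>v N"
proof (rule ccontr)
  assume v0: "v \<noteq> 0\<^sub>v N"
  define cv where "cv = map_vec complex_of_real v"
  have cvc: "cv \<in> carrier_vec N" unfolding cv_def using v by simp
  have "cmat M *\<^sub>v cv = map_vec complex_of_real (0\<^sub>v N)" unfolding cv_def cmat_cvec[OF M v] Mv ..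
  also have "\<dots> = 0 \<cdot>\<^sub>v cv" using cvc by (intro eq_vecI) auto
  finally have ev: "cmat M *\<^sub>v cv = 0 \<cdot>\<^sub>v cv" .
  have "cv \<noteq> 0\<^sub>v N"
  proof
    assume "cv = 0\<^sub>v N"
    hence "v = 0\<^sub>v N" unfolding cv_def using v by (intro eq_vecI) (auto simp: vec_eq_iff)
    thus False using v0 by simp
  qed
  thus False using h[unfolded hurwitz_iff, rule_format, of cv 0] ev cvc M by simp
qed

lemma block_G_rank:
  fixes H F G A12 :: "real mat"
  assumes H: "H \<in> carrier_mat n' n'" and F: "F \<in> carrier_mat n' k" and G: "G \<in> carrier_mat k p"
    and A12: "A12 \<in> carrier_mat p n'"
    and h: "hurwitz (four_block_mat H F (- (G * A12)) (0\<^sub>m k k))"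
  shows "mrank G = k"
proof -
  define M where "M = four_block_mat H F (- (G * A12)) (0\<^sub>m k k)"
  have GA: "- (G * A12) \<in> carrier_mat k n'" using G A12 by simp
  have Mc: "M \<in> carrier_mat (n' + k) (n' + k)" unfolding M_def using H by simp
  have "det M \<noteq> 0"
  proof
    assume "det M = 0"
    then obtain v where v: "v \<in> carrier_vec (n' + k)" "v \<noteq> 0\<^sub>v (n' + k)" "M *\<^sub>v v = 0\<^sub>v (n' + k)"
      using det_0_iff_vec_prod_zero_field[OF Mc] by blast
    thus False using hurwitz_inj[OF Mc h[folded M_def] v(1) v(3)] by simp
  qed
  hence "M \<in> Units (ring_mat TYPE(real) (n' + k) ())" by (rule det_non_zero_imp_unit[OF Mc])
  then obtain Mi where Mi: "Mi \<in> carrier_mat (n' + k) (n' + k)" and MMi: "M * Mi = 1\<^sub>m (n' + k)"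
    unfolding Units_def by (auto simp: ring_mat_simps)
  obtain Z1 Z2 Z3 Z4 where sb: "split_block Mi n' n' = (Z1, Z2, Z3, Z4)" by (cases "split_block Mi n' n'") auto
  note spl = split_block[OF sb, of k k]
  have Z1: "Z1 \<in> carrier_mat n' n'" and Z2: "Z2 \<in> carrier_mat n' k" and Z3: "Z3 \<in> carrier_mat k n'"
    and Z4: "Z4 \<in> carrier_mat k k" and MiZ: "Mi = four_block_mat Z1 Z2 Z3 Z4"
    using spl Mi by auto
  have prod: "M * Mi = four_block_mat (H * Z1 + F * Z3) (H * Z2 + F * Z4)
      (- (G * A12) * Z1 + 0\<^sub>m k k * Z3) (- (G * A12) * Z2 + 0\<^sub>m k k * Z4)"
    unfolding M_def MiZ by (rule mult_four_block_mat[OF H F GA zero_carrier_mat Z1 Z2 Z3 Z4])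
  define D where "D = - (G * A12) * Z2 + 0\<^sub>m k k * Z4"
  have Dc: "D \<in> carrier_mat k k" unfolding D_def using Z4 by simp
  have D1: "D = 1\<^sub>m k"
  proof (rule eq_matI)
    fix i j assume "i < dim_row (1\<^sub>m k :: real mat)" "j < dim_col (1\<^sub>m k :: real mat)"
    hence i: "i < k" and j: "j < k" by auto
    have d1: "dim_row (H * Z1 + F * Z3) = n'" "dim_col (H * Z1 + F * Z3) = n'"
      using F Z3 by auto
    have "(M * Mi) $$ (n' + i, n' + j) = D $$ (i, j)"
      unfolding prod D_def[symmetric] using Dc i j d1 by (subst index_mat_four_block) auto
    moreover have "(M * Mi) $$ (n' + i, n' + j) = (if i = j then 1 else 0)" unfolding MMi using i j by simp
    ultimately show "D $$ (i,j) = 1\<^sub>m k $$ (i,j)" using i j by simp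
  qed (use Dc in auto)
  define X where "X = - (A12 * Z2)"
  have Xc: "X \<in> carrier_mat p k" unfolding X_def using A12 Z2 by simp
  have "G * X = - (G * (A12 * Z2))" unfolding X_def
    using uminus_mult_right_mat[of G "A12 * Z2"] G A12 Z2 by simp
  also have "\<dots> = - ((G * A12) * Z2)" using assoc_mult_mat[OF G A12 Z2] by simp
  also have "\<dots> = - (G * A12) * Z2" using uminus_mult_left_mat[of "G * A12" Z2] G A12 Z2 by simp
  also have "\<dots> = D" unfolding D_def using left_mult_zero_mat[OF Z4] right_add_zero_mat[of _ k k] G A12 Z2
    by simp
  finally have GX: "G * X = 1\<^sub>m k" using D1 by simp
  have "vec_space.rank k G = k" by (rule vec_space.right_inv_rank[OF G Xc GX])
  thus ?thesis using G by simp
qed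

lemma charmat_mult:
  assumes A: "A \<in> carrier_mat n n" and v: "v \<in> carrier_vec n"
  shows "((s \<cdot>\<^sub>m 1\<^sub>m n - cmat A) *\<^sub>v v = 0\<^sub>v n) \<longleftrightarrow> cmat A *\<^sub>v v = s \<cdot>\<^sub>v v"
proof -
  have cA: "cmat A \<in> carrier_mat n n" using A by simp
  have Sc: "s \<cdot>\<^sub>m 1\<^sub>m n - cmat A \<in> carrier_mat n n" by (rule minus_carrier_mat[OF cA])
  have idx: "((s \<cdot>\<^sub>m 1\<^sub>m n - cmat A) *\<^sub>v v) $ i = s * v $ i - (cmat A *\<^sub>v v) $ i" if i: "i < n" for i
  proof -
    have "((s \<cdot>\<^sub>m 1\<^sub>m n - cmat A) *\<^sub>v v) $ i = (\<Sum>j<n. (s \<cdot>\<^sub>m 1\<^sub>m n - cmat A) $$ (i,j) * v $ j)"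
      by (rule mv_index[OF Sc v i])
    also have "\<dots> = (\<Sum>j<n. (if j = i then s * v $ j else 0) - cmat A $$ (i,j) * v $ j)"
      by (rule sum.cong) (use i cA in \<open>auto simp: left_diff_distrib\<close>)
    also have "\<dots> = s * v $ i - (\<Sum>j<n. cmat A $$ (i,j) * v $ j)"
      using i by (simp add: sum_subtractf)
    also have "(\<Sum>j<n. cmat A $$ (i,j) * v $ j) = (cmat A *\<^sub>v v) $ i"
      by (rule mv_index[OF cA v i, symmetric])
    finally show ?thesis .
  qed
  show ?thesis
  proof
    assume h: "(s \<cdot>\<^sub>m 1\<^sub>m n - cmat A) *\<^sub>v v = 0\<^sub>v n"
    show "cmat A *\<^sub>v v = s \<cdot>\<^sub>v v"
    proof (rule eq_vecI)
      fix i assume "i < dim_vec (s \<cdot>\<^sub>v v)"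
      hence i: "i < n" using v by simp
      have "((s \<cdot>\<^sub>m 1\<^sub>m n - cmat A) *\<^sub>v v) $ i = 0" using h i by simp
      thus "(cmat A *\<^sub>v v) $ i = (s \<cdot>\<^sub>v v) $ i" using idx[OF i] i v by simp
    qed (use cA v in simp)
  next
    assume h: "cmat A *\<^sub>v v = s \<cdot>\<^sub>v v"
    show "(s \<cdot>\<^sub>m 1\<^sub>m n - cmat A) *\<^sub>v v = 0\<^sub>v n"
    proof (rule eq_vecI)
      fix i assume "i < dim_vec (0\<^sub>v n)"
      hence i: "i < n" by simp
      show "((s \<cdot>\<^sub>m 1\<^sub>m n - cmat A) *\<^sub>v v) $ i = 0\<^sub>v n $ i" using idx[OF i] h i v by simp
    qed (use A in simp)
  qed
qed

lemma detectable_iff_pbh: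
  assumes A: "A \<in> carrier_mat n n" and C: "C \<in> carrier_mat p n"
  shows "detectable A C \<longleftrightarrow> pbh A C"
proof -
  have cA: "cmat A \<in> carrier_mat n n" and cC: "cmat C \<in> carrier_mat p n" using A C by auto
  define K where "K = (\<lambda>s. cmat C @\<^sub>r (s \<cdot>\<^sub>m 1\<^sub>m n - cmat A))"
  have Kc: "K s \<in> carrier_mat (p + n) n" for s
    unfolding K_def by (rule carrier_append_rows[OF cC minus_carrier_mat[OF cA]])
  have Kv: "(K s *\<^sub>v v = 0\<^sub>v (p + n)) \<longleftrightarrow> (cmat C *\<^sub>v v = 0\<^sub>v p \<and> cmat A *\<^sub>v v = s \<cdot>\<^sub>v v)"
    if v: "v \<in> carrier_vec n" for s v
  proof -
    have "K s *\<^sub>v v = (cmat C *\<^sub>v v) @\<^sub>v ((s \<cdot>\<^sub>m 1\<^sub>m n - cmat A) *\<^sub>v v)"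
      unfolding K_def by (rule mat_mult_append[OF cC minus_carrier_mat[OF cA] v])
    moreover have "0\<^sub>v (p + n) = (0\<^sub>v p :: complex vec) @\<^sub>v 0\<^sub>v n" by (intro eq_vecI) auto
    moreover have "cmat C *\<^sub>v v \<in> carrier_vec p" using cC v by simp
    ultimately have "(K s *\<^sub>v v = 0\<^sub>v (p + n)) \<longleftrightarrow>
        (cmat C *\<^sub>v v = 0\<^sub>v p \<and> (s \<cdot>\<^sub>m 1\<^sub>m n - cmat A) *\<^sub>v v = 0\<^sub>v n)"
      using append_vec_eq[of "cmat C *\<^sub>v v" p "0\<^sub>v p"] by simp
    thus ?thesis using charmat_mult[OF A v] by simp
  qed
  have rk: "(mrank (K s) = n) \<longleftrightarrow> (\<forall>v. v \<in> carrier_vec n \<longrightarrow> K s *\<^sub>v v = 0\<^sub>v (p + n) \<longrightarrow> v = 0\<^sub>v n)" for s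
  proof -
    have dr: "dim_row (K s) = p + n" using Kc[of s] by simp
    show ?thesis unfolding dr
      using vec_space.rank_eq_nc_kernel[OF Kc[of s]] vec_space.kernel_rank_eq_nc[OF Kc[of s]] by blast
  qed
  have "detectable A C \<longleftrightarrow> (\<forall>s. 0 \<le> Re s \<longrightarrow> mrank (K s) = n)"
    unfolding detectable_def K_def using A by simp
  also have "\<dots> \<longleftrightarrow> pbh A C"
    unfolding rk pbh_def using A C Kv by auto
  finally show ?thesis .
qed

lemma cmat_minus: "X \<in> carrier_mat nr nc \<Longrightarrow> Y \<in> carrier_mat nr nc \<Longrightarrow> cmat (X - Y) = cmat X - cmat Y"
  by (rule eq_matI) auto

lemma cmat_uminus: "cmat (- X) = - cmat X"
  by (rule eq_matI) auto

lemma cmat_zero[simp]: "cmat (0\<^sub>m nr nc) = 0\<^sub>m nr nc"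
  by (rule eq_matI) auto

lemma cmat_four_block:
  assumes "A \<in> carrier_mat nr1 nc1" "B \<in> carrier_mat nr1 nc2" "C \<in> carrier_mat nr2 nc1" "D \<in> carrier_mat nr2 nc2"
  shows "cmat (four_block_mat A B C D) = four_block_mat (cmat A) (cmat B) (cmat C) (cmat D)"
  by (rule map_four_block_mat[OF assms])

lemma hurwitz_cinj:
  assumes M: "M \<in> carrier_mat N N" and h: "hurwitz M" and w: "w \<in> carrier_vec N"
    and Mw: "cmat M *\<^sub>v w = 0\<^sub>v N"
  shows "w = 0\<^sub>v N"
proof (rule ccontr)
  assume w0: "w \<noteq> 0\<^sub>v N"
  have "cmat M *\<^sub>v w = 0 \<cdot>\<^sub>v w" using Mw w by (intro eq_vecI) auto
  thus False using h[unfolded hurwitz_iff, rule_format, of w 0] w w0 M by simp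
qed

lemma real_inj_cinj:
  fixes B :: "real mat"
  assumes B: "B \<in> carrier_mat m k" and inj: "\<And>w. w \<in> carrier_vec k \<Longrightarrow> B *\<^sub>v w = 0\<^sub>v m \<Longrightarrow> w = 0\<^sub>v k"
    and w: "w \<in> carrier_vec k" and Bw: "cmat B *\<^sub>v w = 0\<^sub>v m"
  shows "w = 0\<^sub>v k"
proof -
  define wr where "wr = vec k (\<lambda>j. Re (w $ j))"
  define wi where "wi = vec k (\<lambda>j. Im (w $ j))"
  have wrc: "wr \<in> carrier_vec k" and wic: "wi \<in> carrier_vec k" unfolding wr_def wi_def by auto
  have sums: "(\<Sum>j<k. complex_of_real (B $$ (i,j)) * w $ j) = 0" if i: "i < m" for i
    using cmv_index[OF B w i] Bw i by simp
  have "B *\<^sub>v wr = 0\<^sub>v m"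
  proof (rule eq_vecI)
    fix i assume "i < dim_vec (0\<^sub>v m)"
    hence i: "i < m" by simp
    have "(B *\<^sub>v wr) $ i = (\<Sum>j<k. B $$ (i,j) * wr $ j)" by (rule mv_index[OF B wrc i])
    also have "\<dots> = (\<Sum>j<k. Re (complex_of_real (B $$ (i,j)) * w $ j))"
      unfolding wr_def by (rule sum.cong) auto
    also have "\<dots> = Re (\<Sum>j<k. complex_of_real (B $$ (i,j)) * w $ j)" by (simp add: Re_sum)
    also have "\<dots> = 0" using sums[OF i] by simp
    finally show "(B *\<^sub>v wr) $ i = 0\<^sub>v m $ i" using i by simp
  qed (use B in simp)
  hence r0: "wr = 0\<^sub>v k" using inj wrc by blast
  have "B *\<^sub>v wi = 0\<^sub>v m"
  proof (rule eq_vecI)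
    fix i assume "i < dim_vec (0\<^sub>v m)"
    hence i: "i < m" by simp
    have "(B *\<^sub>v wi) $ i = (\<Sum>j<k. B $$ (i,j) * wi $ j)" by (rule mv_index[OF B wic i])
    also have "\<dots> = (\<Sum>j<k. Im (complex_of_real (B $$ (i,j)) * w $ j))"
      unfolding wi_def by (rule sum.cong) auto
    also have "\<dots> = Im (\<Sum>j<k. complex_of_real (B $$ (i,j)) * w $ j)" by (simp add: Im_sum)
    also have "\<dots> = 0" using sums[OF i] by simp
    finally show "(B *\<^sub>v wi) $ i = 0\<^sub>v m $ i" using i by simp
  qed (use B in simp)
  hence i0: "wi = 0\<^sub>v k" using inj wic by blast
  show "w = 0\<^sub>v k"
  proof (rule eq_vecI)
    fix j assume "j < dim_vec (0\<^sub>v k)"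
    hence j: "j < k" by simp
    have "Re (w $ j) = 0" "Im (w $ j) = 0"
      using arg_cong[OF r0, of "\<lambda>x. x $ j"] arg_cong[OF i0, of "\<lambda>x. x $ j"] j
      unfolding wr_def wi_def by auto
    thus "w $ j = 0\<^sub>v k $ j" using j by (simp add: complex_eq_iff)
  qed (use w in simp)
qed

lemma ctz:
  assumes z: "z \<in> carrier_vec (p + n')" and i: "i < p"
  shows "(cmat (mat p (p + n') (\<lambda>(i, j). if i = j then 1 else 0)) *\<^sub>v z) $ i = z $ i"
proof -
  have Mc: "mat p (p + n') (\<lambda>(i, j). if i = j then 1 else (0::real)) \<in> carrier_mat p (p + n')" by simp
  have "(cmat (mat p (p + n') (\<lambda>(i, j). if i = j then 1 else (0::real))) *\<^sub>v z) $ i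
     = (\<Sum>j<p + n'. complex_of_real (mat p (p + n') (\<lambda>(i, j). if i = j then 1 else (0::real)) $$ (i, j)) * z $ j)"
    by (rule cmv_index[OF Mc z i])
  also have "\<dots> = (\<Sum>j<p + n'. if j = i then z $ j else 0)"
    by (rule sum.cong) (auto simp: i)
  also have "\<dots> = z $ i" using i by simp
  finally show ?thesis .
qed

lemma pbh_block:
  fixes A11 A12 A21 A22 :: "real mat"
  assumes A11: "A11 \<in> carrier_mat p p" and A12: "A12 \<in> carrier_mat p n'" and A21: "A21 \<in> carrier_mat n' p"
    and A22: "A22 \<in> carrier_mat n' n'"
  shows "pbh (four_block_mat A11 A12 A21 A22) (mat p (p + n') (\<lambda>(i, j). if i = j then 1 else 0))
     \<longleftrightarrow> pbh A22 A12"
proof -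
  define CT :: "real mat" where "CT = mat p (p + n') (\<lambda>(i, j). if i = j then 1 else 0)"
  define Ah where "Ah = four_block_mat A11 A12 A21 A22"
  have Ahc: "Ah \<in> carrier_mat (p + n') (p + n')" unfolding Ah_def using A11 A22 by simp
  have CTc: "CT \<in> carrier_mat p (p + n')" unfolding CT_def by simp
  have cAh: "cmat Ah = four_block_mat (cmat A11) (cmat A12) (cmat A21) (cmat A22)"
    unfolding Ah_def by (rule cmat_four_block[OF A11 A12 A21 A22])
  have cA11: "cmat A11 \<in> carrier_mat p p" and cA12: "cmat A12 \<in> carrier_mat p n'"
    and cA21: "cmat A21 \<in> carrier_mat n' p" and cA22: "cmat A22 \<in> carrier_mat n' n'"
    using A11 A12 A21 A22 by auto
  have mulv: "cmat Ah *\<^sub>v (0\<^sub>v p @\<^sub>v z2) = (cmat A12 *\<^sub>v z2) @\<^sub>v (cmat A22 *\<^sub>v z2)"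
    if z2: "z2 \<in> carrier_vec n'" for z2
  proof -
    have "cmat Ah *\<^sub>v (0\<^sub>v p @\<^sub>v z2) = (cmat A11 *\<^sub>v 0\<^sub>v p + cmat A12 *\<^sub>v z2) @\<^sub>v (cmat A21 *\<^sub>v 0\<^sub>v p + cmat A22 *\<^sub>v z2)"
      unfolding cAh by (rule four_block_mat_mult_vec[OF cA11 cA12 cA21 cA22 zero_carrier_vec z2])
    also have "cmat A11 *\<^sub>v 0\<^sub>v p = 0\<^sub>v p" using cA11 by auto
    also have "cmat A21 *\<^sub>v 0\<^sub>v p = 0\<^sub>v n'" using cA21 by auto
    also have "0\<^sub>v p + cmat A12 *\<^sub>v z2 = cmat A12 *\<^sub>v z2" using cA12 z2 by simp
    also have "0\<^sub>v n' + cmat A22 *\<^sub>v z2 = cmat A22 *\<^sub>v z2" using cA22 z2 by simp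
    finally show ?thesis .
  qed
  have z0: "0\<^sub>v (p + n') = (0\<^sub>v p :: complex vec) @\<^sub>v 0\<^sub>v n'" by (intro eq_vecI) auto
  have sz: "s \<cdot>\<^sub>v (0\<^sub>v p @\<^sub>v z2) = 0\<^sub>v p @\<^sub>v (s \<cdot>\<^sub>v z2)" if z2: "z2 \<in> carrier_vec n'" for s :: complex and z2
    using z2 by (intro eq_vecI) auto
  have "pbh Ah CT \<longleftrightarrow> pbh A22 A12"
  proof
    assume P: "pbh Ah CT"
    show "pbh A22 A12"
    proof (rule pbhI[OF A22 A12])
      fix s z2 assume s: "0 \<le> Re s" and z2: "z2 \<in> carrier_vec n'" and ev: "cmat A22 *\<^sub>v z2 = s \<cdot>\<^sub>v z2"
        and cz: "cmat A12 *\<^sub>v z2 = 0\<^sub>v p"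
      define z where "z = 0\<^sub>v p @\<^sub>v z2"
      have zc: "z \<in> carrier_vec (p + n')" unfolding z_def using z2 by simp
      have Az: "cmat Ah *\<^sub>v z = s \<cdot>\<^sub>v z" unfolding z_def mulv[OF z2] sz[OF z2] cz ev ..
      have Cz: "cmat CT *\<^sub>v z = 0\<^sub>v p"
      proof (rule eq_vecI)
        fix i assume "i < dim_vec (0\<^sub>v p)"
        hence i: "i < p" by simp
        show "(cmat CT *\<^sub>v z) $ i = 0\<^sub>v p $ i" unfolding CT_def ctz[OF zc i] using i unfolding z_def by simp
      qed (use CTc in simp)
      have "z = 0\<^sub>v (p + n')" by (rule pbhD[OF P Ahc CTc s zc Az Cz])
      hence "0\<^sub>v p @\<^sub>v z2 = 0\<^sub>v p @\<^sub>v 0\<^sub>v n'" unfolding z_def z0 .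
      thus "z2 = 0\<^sub>v n'" using append_vec_eq[of "0\<^sub>v p :: complex vec" p "0\<^sub>v p" z2 "0\<^sub>v n'"] by simp
    qed
  next
    assume P: "pbh A22 A12"
    show "pbh Ah CT"
    proof (rule pbhI[OF Ahc CTc])
      fix s z assume s: "0 \<le> Re s" and zc: "z \<in> carrier_vec (p + n')"
        and ev: "cmat Ah *\<^sub>v z = s \<cdot>\<^sub>v z"
        and cz: "cmat CT *\<^sub>v z = 0\<^sub>v p"
      define z2 where "z2 = vec_last z n'"
      have z2c: "z2 \<in> carrier_vec n'" unfolding z2_def by simp
      have z1: "vec_first z p = 0\<^sub>v p"
      proof (rule eq_vecI)
        fix i assume "i < dim_vec (0\<^sub>v p)"
        hence i: "i < p" by simp
        have "z $ i = 0" using ctz[OF zc i] cz i unfolding CT_def by simp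
        thus "vec_first z p $ i = 0\<^sub>v p $ i" using i unfolding vec_first_def by simp
      qed simp
      have zz: "z = 0\<^sub>v p @\<^sub>v z2" unfolding z2_def using vec_first_last_append[OF zc] z1 by simp
      have "(cmat A12 *\<^sub>v z2) @\<^sub>v (cmat A22 *\<^sub>v z2) = 0\<^sub>v p @\<^sub>v (s \<cdot>\<^sub>v z2)"
        using ev unfolding zz mulv[OF z2c] sz[OF z2c] .
      moreover have "cmat A12 *\<^sub>v z2 \<in> carrier_vec p" using cA12 z2c by simp
      ultimately have e1: "cmat A12 *\<^sub>v z2 = 0\<^sub>v p" and e2: "cmat A22 *\<^sub>v z2 = s \<cdot>\<^sub>v z2"
        using append_vec_eq[of "cmat A12 *\<^sub>v z2" p "0\<^sub>v p"] by auto
      have "z2 = 0\<^sub>v n'" by (rule pbhD[OF P A22 A12 s z2c e2 e1])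
      thus "z = 0\<^sub>v (p + n')" unfolding zz z0 by simp
    qed
  qed
  thus ?thesis unfolding Ah_def CT_def .
qed

lemma pbh_T:
  assumes A: "A \<in> carrier_mat n n" and C: "C \<in> carrier_mat p n" and T: "T \<in> carrier_mat n n"
    and Ti: "Tinv \<in> carrier_mat n n" and TTi: "T * Tinv = 1\<^sub>m n" and TiT: "Tinv * T = 1\<^sub>m n"
  shows "pbh A C \<longleftrightarrow> pbh (Tinv * A * T) (C * T)"
proof
  assume "pbh A C"
  thus "pbh (Tinv * A * T) (C * T)" by (rule pbh_sim[OF Ti T A C TTi TiT])
next
  assume P: "pbh (Tinv * A * T) (C * T)"
  have A'c: "Tinv * A * T \<in> carrier_mat n n" using Ti A T by simp
  have C'c: "C * T \<in> carrier_mat p n" using C T by simp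
  have "pbh (T * (Tinv * A * T) * Tinv) (C * T * Tinv)" by (rule pbh_sim[OF T Ti A'c C'c TiT TTi P])
  moreover have "T * (Tinv * A * T) * Tinv = A"
  proof -
    have AT: "A * T \<in> carrier_mat n n" using A T by simp
    have "Tinv * A * T = Tinv * (A * T)" by (rule assoc_mult_mat[OF Ti A T])
    hence "T * (Tinv * A * T) = (T * Tinv) * (A * T)" using assoc_mult_mat[OF T Ti AT] by simp
    hence "T * (Tinv * A * T) = A * T" unfolding TTi using left_mult_one_mat[OF AT] by simp
    hence "T * (Tinv * A * T) * Tinv = A * (T * Tinv)" using assoc_mult_mat[OF A T Ti] by simp
    thus ?thesis unfolding TTi using right_mult_one_mat[OF A] by simp
  qed
  moreover have "C * T * Tinv = C" using assoc_mult_mat[OF C T Ti] TTi right_mult_one_mat[OF C] by simp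
  ultimately show "pbh A C" by simp
qed

lemma zero_append_helper: "0\<^sub>v (n + m) = (0\<^sub>v n :: 'a :: zero vec) @\<^sub>v 0\<^sub>v m"
  by (intro eq_vecI) auto

lemma necessity:
  fixes A12 A22 L F G :: "real mat"
  assumes A12: "A12 \<in> carrier_mat p n'" and A22: "A22 \<in> carrier_mat n' n'"
    and L: "L \<in> carrier_mat n' p" and F: "F \<in> carrier_mat n' k" and G: "G \<in> carrier_mat k p"
    and obs: "ro_pi_observer A12 A22 L F G"
  shows "pbh A22 A12"
proof (rule pbhI[OF A22 A12])
  define M where "M = four_block_mat (A22 - L * A12) F (- (G * A12)) (0\<^sub>m k k)"
  have h: "hurwitz M" using obs G unfolding ro_pi_observer_def M_def by simp
  have LA: "L * A12 \<in> carrier_mat n' n'" and GA: "G * A12 \<in> carrier_mat k n'" using L G A12 by auto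
  have X: "A22 - L * A12 \<in> carrier_mat n' n'" by (rule minus_carrier_mat[OF LA])
  have Y: "- (G * A12) \<in> carrier_mat k n'" by (rule uminus_carrier_mat[OF GA])
  have Mc: "M \<in> carrier_mat (n' + k) (n' + k)" unfolding M_def using X by simp
  have cL: "cmat L \<in> carrier_mat n' p" and cA12: "cmat A12 \<in> carrier_mat p n'" and cA22: "cmat A22 \<in> carrier_mat n' n'"
    and cF: "cmat F \<in> carrier_mat n' k" and cG: "cmat G \<in> carrier_mat k p" using L A12 A22 F G by auto
  have cM: "cmat M = four_block_mat (cmat A22 - cmat L * cmat A12) (cmat F) (- (cmat G * cmat A12)) (0\<^sub>m k k)"
    unfolding M_def cmat_four_block[OF X F Y zero_carrier_mat] cmat_minus[OF A22 LA] cmat_uminus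
      cmat_mult[OF L A12] cmat_mult[OF G A12] cmat_zero ..
  fix s z2 assume s: "0 \<le> Re s" and z2: "z2 \<in> carrier_vec n'" and ev: "cmat A22 *\<^sub>v z2 = s \<cdot>\<^sub>v z2"
    and cz: "cmat A12 *\<^sub>v z2 = 0\<^sub>v p"
  show "z2 = 0\<^sub>v n'"
  proof (rule ccontr)
    assume z0: "z2 \<noteq> 0\<^sub>v n'"
    define v where "v = z2 @\<^sub>v (0\<^sub>v k :: complex vec)"
    have vc: "v \<in> carrier_vec (n' + k)" unfolding v_def using z2 by simp
    have cLA: "cmat L * cmat A12 \<in> carrier_mat n' n'" and cGA: "cmat G * cmat A12 \<in> carrier_mat k n'"
      using cL cA12 cG by auto
    have e1: "(cmat A22 - cmat L * cmat A12) *\<^sub>v z2 = s \<cdot>\<^sub>v z2"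
    proof -
      have "(cmat A22 - cmat L * cmat A12) *\<^sub>v z2 = cmat A22 *\<^sub>v z2 - (cmat L * cmat A12) *\<^sub>v z2"
        by (rule minus_mult_distrib_mat_vec[OF cA22 cLA z2])
      also have "(cmat L * cmat A12) *\<^sub>v z2 = cmat L *\<^sub>v (cmat A12 *\<^sub>v z2)"
        by (rule assoc_mult_mat_vec[OF cL cA12 z2])
      also have "\<dots> = 0\<^sub>v n'" unfolding cz using cL by auto
      finally show ?thesis unfolding ev using z2 by simp
    qed
    have e2: "(- (cmat G * cmat A12)) *\<^sub>v z2 = 0\<^sub>v k"
    proof -
      have "(- (cmat G * cmat A12)) *\<^sub>v z2 = - ((cmat G * cmat A12) *\<^sub>v z2)"
        by (rule uminus_mult_mat_vec) (use A12 z2 in simp)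
      also have "(cmat G * cmat A12) *\<^sub>v z2 = cmat G *\<^sub>v (cmat A12 *\<^sub>v z2)"
        by (rule assoc_mult_mat_vec[OF cG cA12 z2])
      also have "\<dots> = 0\<^sub>v k" unfolding cz using cG by auto
      finally show ?thesis by simp
    qed
    have "cmat M *\<^sub>v v = ((cmat A22 - cmat L * cmat A12) *\<^sub>v z2 + cmat F *\<^sub>v 0\<^sub>v k)
        @\<^sub>v ((- (cmat G * cmat A12)) *\<^sub>v z2 + 0\<^sub>m k k *\<^sub>v 0\<^sub>v k)"
      unfolding cM v_def
      by (rule four_block_mat_mult_vec[OF minus_carrier_mat[OF cLA] cF uminus_carrier_mat[OF cGA] zero_carrier_mat z2 zero_carrier_vec])
    also have "\<dots> = (s \<cdot>\<^sub>v z2) @\<^sub>v 0\<^sub>v k" unfolding e1 e2 using cF z2 by auto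
    also have "\<dots> = s \<cdot>\<^sub>v v" unfolding v_def using z2 by (intro eq_vecI) auto
    finally have ev2: "cmat M *\<^sub>v v = s \<cdot>\<^sub>v v" .
    have v0: "v \<noteq> 0\<^sub>v (n' + k)"
    proof
      assume "v = 0\<^sub>v (n' + k)"
      hence "z2 @\<^sub>v 0\<^sub>v k = 0\<^sub>v n' @\<^sub>v (0\<^sub>v k :: complex vec)" unfolding v_def by (metis zero_append_helper)
      thus False using z0 z2 by simp
    qed
    have "Re s < 0" using h[unfolded hurwitz_iff, rule_format, of v s] vc v0 ev2 Mc by simp
    thus False using s by simp
  qed
qed

lemma construct:
  fixes A12 A22 :: "real mat"
  assumes A12: "A12 \<in> carrier_mat p n'" and A22: "A22 \<in> carrier_mat n' n'" and P: "pbh A22 A12"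
    and kq: "k \<le> mrank A12"
  shows "\<exists>L F G. L \<in> carrier_mat n' p \<and> F \<in> carrier_mat n' k \<and> G \<in> carrier_mat k p
       \<and> mrank G = k \<and> ro_pi_observer A12 A22 L F G"
proof -
  obtain L0 where L0: "L0 \<in> carrier_mat n' p" and hH0: "hurwitz (A22 - L0 * A12)"
    using obs_exists[OF A22 A12 P] by blast
  define H0 where "H0 = A22 - L0 * A12"
  have H0c: "H0 \<in> carrier_mat n' n'" unfolding H0_def by (rule minus_carrier_mat[OF mult_carrier_mat[OF L0 A12]])
  have kq': "k \<le> vec_space.rank p A12" using kq A12 by simp
  obtain Y where Y: "Y \<in> carrier_mat n' k"
    and Yinj: "\<And>w. w \<in> carrier_vec k \<Longrightarrow> (A12 * Y) *\<^sub>v w = 0\<^sub>v p \<Longrightarrow> w = 0\<^sub>v k"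
    using vec_space.indep_cols_exist[OF A12 kq'] by blast
  define F where "F = H0 * Y"
  have Fc: "F \<in> carrier_mat n' k" unfolding F_def using H0c Y by simp
  define Ab where "Ab = four_block_mat A22 F (0\<^sub>m k n') (0\<^sub>m k k)"
  define Pr :: "real mat" where "Pr = mat n' (n' + k) (\<lambda>(i, j). if i = j then 1 else 0)"
  define Cb where "Cb = A12 * Pr"
  have Abc: "Ab \<in> carrier_mat (n' + k) (n' + k)" unfolding Ab_def using A22 by simp
  have Prc: "Pr \<in> carrier_mat n' (n' + k)" unfolding Pr_def by simp
  have Cbc: "Cb \<in> carrier_mat p (n' + k)" unfolding Cb_def using A12 Prc by simp
  have cA12: "cmat A12 \<in> carrier_mat p n'" and cA22: "cmat A22 \<in> carrier_mat n' n'"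
    and cF: "cmat F \<in> carrier_mat n' k" and cY: "cmat Y \<in> carrier_mat n' k"
    and cH0: "cmat H0 \<in> carrier_mat n' n'" and cL0: "cmat L0 \<in> carrier_mat n' p"
    and cPr: "cmat Pr \<in> carrier_mat n' (n' + k)"
    using A12 A22 Fc Y H0c L0 Prc by auto
  have PB: "pbh Ab Cb"
  proof (rule pbhI[OF Abc Cbc])
    fix s v assume s: "0 \<le> Re s" and vc: "v \<in> carrier_vec (n' + k)" and ev: "cmat Ab *\<^sub>v v = s \<cdot>\<^sub>v v"
      and cv: "cmat Cb *\<^sub>v v = 0\<^sub>v p"
    define v1 where "v1 = vec_first v n'"
    define v2 where "v2 = vec_last v k"
    have v1c: "v1 \<in> carrier_vec n'" and v2c: "v2 \<in> carrier_vec k" unfolding v1_def v2_def by auto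
    have vv: "v = v1 @\<^sub>v v2" unfolding v1_def v2_def using vec_first_last_append[OF vc] by simp
    have "cmat Ab *\<^sub>v v = (cmat A22 *\<^sub>v v1 + cmat F *\<^sub>v v2) @\<^sub>v (0\<^sub>m k n' *\<^sub>v v1 + 0\<^sub>m k k *\<^sub>v v2)"
      unfolding Ab_def vv cmat_four_block[OF A22 Fc zero_carrier_mat zero_carrier_mat] cmat_zero
      by (rule four_block_mat_mult_vec[OF cA22 cF zero_carrier_mat zero_carrier_mat v1c v2c])
    also have "0\<^sub>m k n' *\<^sub>v v1 + 0\<^sub>m k k *\<^sub>v v2 = 0\<^sub>v k" using v1c v2c by auto
    finally have Av: "cmat Ab *\<^sub>v v = (cmat A22 *\<^sub>v v1 + cmat F *\<^sub>v v2) @\<^sub>v 0\<^sub>v k" .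
    have sv: "s \<cdot>\<^sub>v v = (s \<cdot>\<^sub>v v1) @\<^sub>v (s \<cdot>\<^sub>v v2)" unfolding vv using v1c v2c by (intro eq_vecI) auto
    have "cmat A22 *\<^sub>v v1 + cmat F *\<^sub>v v2 \<in> carrier_vec n'" using cA22 cF v1c v2c by simp
    hence e1: "cmat A22 *\<^sub>v v1 + cmat F *\<^sub>v v2 = s \<cdot>\<^sub>v v1" and e2: "0\<^sub>v k = s \<cdot>\<^sub>v v2"
      using ev unfolding Av sv using append_vec_eq[of "cmat A22 *\<^sub>v v1 + cmat F *\<^sub>v v2" n' "s \<cdot>\<^sub>v v1"] v1c
      by auto
    have Prv: "cmat Pr *\<^sub>v v = v1"
    proof (rule eq_vecI)
      fix i assume "i < dim_vec v1"
      hence i: "i < n'" using v1c by simp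
      show "(cmat Pr *\<^sub>v v) $ i = v1 $ i" unfolding Pr_def ctz[OF vc i] v1_def vec_first_def using i by simp
    qed (use cPr v1c in simp)
    have e3: "cmat A12 *\<^sub>v v1 = 0\<^sub>v p"
    proof -
      have "cmat Cb *\<^sub>v v = cmat A12 *\<^sub>v (cmat Pr *\<^sub>v v)"
        unfolding Cb_def cmat_mult[OF A12 Prc] by (rule assoc_mult_mat_vec[OF cA12 cPr vc])
      thus ?thesis using cv Prv by simp
    qed
    have "v1 = 0\<^sub>v n' \<and> v2 = 0\<^sub>v k"
    proof (cases "s = 0")
      case True
      have cFe: "cmat F = cmat H0 * cmat Y" unfolding F_def by (rule cmat_mult[OF H0c Y])
      have cH0e: "cmat H0 = cmat A22 - cmat L0 * cmat A12"
        unfolding H0_def cmat_minus[OF A22 mult_carrier_mat[OF L0 A12]] cmat_mult[OF L0 A12] ..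
      have Yv2: "cmat Y *\<^sub>v v2 \<in> carrier_vec n'" using cY v2c by simp
      have "cmat H0 *\<^sub>v v1 = cmat A22 *\<^sub>v v1 - (cmat L0 * cmat A12) *\<^sub>v v1"
        unfolding cH0e by (rule minus_mult_distrib_mat_vec[OF cA22 mult_carrier_mat[OF cL0 cA12] v1c])
      also have "(cmat L0 * cmat A12) *\<^sub>v v1 = cmat L0 *\<^sub>v (cmat A12 *\<^sub>v v1)"
        by (rule assoc_mult_mat_vec[OF cL0 cA12 v1c])
      also have "\<dots> = 0\<^sub>v n'" unfolding e3 using cL0 by auto
      finally have H0v1: "cmat H0 *\<^sub>v v1 = cmat A22 *\<^sub>v v1" using cA22 v1c by simp
      have "cmat H0 *\<^sub>v (v1 + cmat Y *\<^sub>v v2) = cmat H0 *\<^sub>v v1 + cmat H0 *\<^sub>v (cmat Y *\<^sub>v v2)"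
        by (rule mult_add_distrib_mat_vec[OF cH0 v1c Yv2])
      also have "cmat H0 *\<^sub>v (cmat Y *\<^sub>v v2) = cmat F *\<^sub>v v2"
        unfolding cFe by (rule assoc_mult_mat_vec[OF cH0 cY v2c, symmetric])
      also have "cmat H0 *\<^sub>v v1 + cmat F *\<^sub>v v2 = 0\<^sub>v n'" unfolding H0v1 e1 True using v1c
        by (intro eq_vecI) auto
      finally have "cmat H0 *\<^sub>v (v1 + cmat Y *\<^sub>v v2) = 0\<^sub>v n'" .
      hence sum0: "v1 + cmat Y *\<^sub>v v2 = 0\<^sub>v n'"
        using hurwitz_cinj[OF H0c hH0[folded H0_def]] v1c Yv2 by simp
      have "cmat A12 *\<^sub>v (v1 + cmat Y *\<^sub>v v2) = cmat A12 *\<^sub>v v1 + cmat A12 *\<^sub>v (cmat Y *\<^sub>v v2)"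
        by (rule mult_add_distrib_mat_vec[OF cA12 v1c Yv2])
      moreover have "cmat A12 *\<^sub>v 0\<^sub>v n' = 0\<^sub>v p" using cA12 by auto
      moreover have "cmat A12 *\<^sub>v (cmat Y *\<^sub>v v2) \<in> carrier_vec p" using cA12 Yv2 by simp
      ultimately have "cmat A12 *\<^sub>v (cmat Y *\<^sub>v v2) = 0\<^sub>v p" unfolding sum0 e3 by simp
      hence "cmat (A12 * Y) *\<^sub>v v2 = 0\<^sub>v p"
        unfolding cmat_mult[OF A12 Y] using assoc_mult_mat_vec[OF cA12 cY v2c] by simp
      hence v20: "v2 = 0\<^sub>v k"
        using real_inj_cinj[OF mult_carrier_mat[OF A12 Y] Yinj v2c] by blast
      hence "cmat Y *\<^sub>v v2 = 0\<^sub>v n'" using cY by auto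
      hence "v1 = 0\<^sub>v n'" using sum0 v1c by simp
      thus ?thesis using v20 by simp
    next
      case False
      have v20: "v2 = 0\<^sub>v k"
      proof (rule eq_vecI)
        fix i assume "i < dim_vec (0\<^sub>v k)"
        hence i: "i < k" by simp
        have "s * v2 $ i = 0" using arg_cong[OF e2, of "\<lambda>x. x $ i"] i v2c by simp
        thus "v2 $ i = 0\<^sub>v k $ i" using False i by simp
      qed (use v2c in simp)
      have "cmat F *\<^sub>v v2 = 0\<^sub>v n'" unfolding v20 using cF by auto
      hence "cmat A22 *\<^sub>v v1 = s \<cdot>\<^sub>v v1" using e1 cA22 v1c by simp
      hence "v1 = 0\<^sub>v n'" by (rule pbhD[OF P A22 A12 s v1c _ e3])
      thus ?thesis using v20 by simp
    qed
    thus "v = 0\<^sub>v (n' + k)" unfolding vv by (metis zero_append_helper)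
  qed
  obtain Lb where Lb: "Lb \<in> carrier_mat (n' + k) p" and hb: "hurwitz (Ab - Lb * Cb)"
    using obs_exists[OF Abc Cbc PB] by blast
  define L where "L = mat n' p (\<lambda>(i,j). Lb $$ (i,j))"
  define G where "G = mat k p (\<lambda>(i,j). Lb $$ (n' + i, j))"
  have Lc: "L \<in> carrier_mat n' p" and Gc: "G \<in> carrier_mat k p" unfolding L_def G_def by auto
  have Cbi: "Cb $$ (r, j) = (if j < n' then A12 $$ (r, j) else 0)" if r: "r < p" and j: "j < n' + k" for r j
  proof -
    have "Cb $$ (r, j) = (\<Sum>l<n'. A12 $$ (r,l) * Pr $$ (l,j))" unfolding Cb_def by (rule mm_index[OF A12 Prc r j])
    also have "\<dots> = (\<Sum>l<n'. if l = j then A12 $$ (r,l) else 0)"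
      unfolding Pr_def by (rule sum.cong) (auto simp: j)
    also have "\<dots> = (if j < n' then A12 $$ (r, j) else 0)" by simp
    finally show ?thesis .
  qed
  have LbCb: "(Lb * Cb) $$ (i, j) = (if j < n' then (\<Sum>r<p. Lb $$ (i,r) * A12 $$ (r,j)) else 0)"
    if i: "i < n' + k" and j: "j < n' + k" for i j
  proof -
    have "(Lb * Cb) $$ (i, j) = (\<Sum>r<p. Lb $$ (i,r) * Cb $$ (r,j))" by (rule mm_index[OF Lb Cbc i j])
    also have "\<dots> = (\<Sum>r<p. if j < n' then Lb $$ (i,r) * A12 $$ (r,j) else 0)"
      by (rule sum.cong) (auto simp: Cbi j)
    finally show ?thesis by simp
  qed
  have LA: "L * A12 \<in> carrier_mat n' n'" and GA: "G * A12 \<in> carrier_mat k n'" using Lc Gc A12 by auto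
  have X: "A22 - L * A12 \<in> carrier_mat n' n'" by (rule minus_carrier_mat[OF LA])
  have eqM: "Ab - Lb * Cb = four_block_mat (A22 - L * A12) F (- (G * A12)) (0\<^sub>m k k)"
  proof (rule eq_matI)
    show "dim_row (Ab - Lb * Cb) = dim_row (four_block_mat (A22 - L * A12) F (- (G * A12)) (0\<^sub>m k k))"
      using Lb Lc by simp
    show "dim_col (Ab - Lb * Cb) = dim_col (four_block_mat (A22 - L * A12) F (- (G * A12)) (0\<^sub>m k k))"
      using Cbc A12 Fc by simp
    fix i j assume "i < dim_row (four_block_mat (A22 - L * A12) F (- (G * A12)) (0\<^sub>m k k))"
      "j < dim_col (four_block_mat (A22 - L * A12) F (- (G * A12)) (0\<^sub>m k k))"
    hence i: "i < n' + k" and j: "j < n' + k" using Lc Fc A12 by auto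
    have lhs: "(Ab - Lb * Cb) $$ (i, j) = Ab $$ (i,j) - (Lb * Cb) $$ (i,j)"
      using Lb Cbc i j by simp
    show "(Ab - Lb * Cb) $$ (i, j) = four_block_mat (A22 - L * A12) F (- (G * A12)) (0\<^sub>m k k) $$ (i, j)"
    proof (cases "i < n'")
      case True note ii = this
      show ?thesis
      proof (cases "j < n'")
        case True
        have "(L * A12) $$ (i,j) = (\<Sum>r<p. L $$ (i,r) * A12 $$ (r,j))" by (rule mm_index[OF Lc A12 ii True])
        also have "\<dots> = (\<Sum>r<p. Lb $$ (i,r) * A12 $$ (r,j))" unfolding L_def by (rule sum.cong) (auto simp: ii)
        finally have "(L * A12) $$ (i,j) = (\<Sum>r<p. Lb $$ (i,r) * A12 $$ (r,j))" .
        thus ?thesis unfolding lhs LbCb[OF i j] using ii True X A22 Fc LA Lc A12 by (simp add: Ab_def)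
      next
        case False
        thus ?thesis unfolding lhs LbCb[OF i j] using ii i j X A22 Fc LA Lc Gc A12 by (simp add: Ab_def)
      qed
    next
      case False note ii = this
      have ik: "i - n' < k" using i ii by simp
      show ?thesis
      proof (cases "j < n'")
        case True
        have "(G * A12) $$ (i - n',j) = (\<Sum>r<p. G $$ (i - n',r) * A12 $$ (r,j))" by (rule mm_index[OF Gc A12 ik True])
        also have "\<dots> = (\<Sum>r<p. Lb $$ (i,r) * A12 $$ (r,j))" unfolding G_def by (rule sum.cong) (use ii ik in auto)
        finally have "(G * A12) $$ (i - n',j) = (\<Sum>r<p. Lb $$ (i,r) * A12 $$ (r,j))" .
        thus ?thesis unfolding lhs LbCb[OF i j] using ii i True X A22 Fc LA GA Lc Gc A12 by (simp add: Ab_def)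
      next
        case False
        thus ?thesis unfolding lhs LbCb[OF i j] using ii i j X A22 Fc LA Lc Gc A12 by (simp add: Ab_def)
      qed
    qed
  qed
  have hM: "hurwitz (four_block_mat (A22 - L * A12) F (- (G * A12)) (0\<^sub>m k k))" using hb unfolding eqM .
  have rG: "mrank G = k" by (rule block_G_rank[OF X Fc Gc A12 hM])
  have "ro_pi_observer A12 A22 L F G" unfolding ro_pi_observer_def using hM Gc by simp
  thus ?thesis using Lc Fc Gc rG by blast
qed

theorem theorem2:
  fixes n m p k q :: nat
    and A B C T Tinv A11 A12 A21 A22 :: "real mat"
  assumes "A \<in> carrier_mat n n" and "B \<in> carrier_mat n m" and "C \<in> carrier_mat p n"
    and "mrank C = p"
    and "T \<in> carrier_mat n n" and "Tinv \<in> carrier_mat n n"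
    and "T * Tinv = 1\<^sub>m n" and "Tinv * T = 1\<^sub>m n"
    and "C * T = mat p n (\<lambda>(i, j). if i = j then 1 else 0)"
    and "split_block (Tinv * A * T) p p = (A11, A12, A21, A22)"
    and "mrank A12 = q"
    and "q \<ge> k"
  shows "detectable A C \<longleftrightarrow>
    (\<exists>L F G. L \<in> carrier_mat (n - p) p \<and> F \<in> carrier_mat (n - p) k \<and> G \<in> carrier_mat k p
       \<and> mrank G = k \<and> ro_pi_observer A12 A22 L F G)"
proof -
  note A = assms(1) and C = assms(3) and rC = assms(4) and T = assms(5) and Ti = assms(6)
    and TTi = assms(7) and TiT = assms(8) and CT = assms(9) and sb = assms(10) and rA = assms(11)
    and qk = assms(12)
  have "vec_space.rank p C \<le> n" by (rule vec_space.rank_le_nc[OF C])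
  hence pn: "p \<le> n" using rC C by simp
  define n' where "n' = n - p"
  have nn: "n = p + n'" using pn by (simp add: n'_def)
  have Ahc: "Tinv * A * T \<in> carrier_mat n n" using Ti A T by simp
  have dims: "dim_row (Tinv * A * T) = p + n'" "dim_col (Tinv * A * T) = p + n'" using Ahc nn by auto
  note spl = split_block[OF sb dims]
  have A11: "A11 \<in> carrier_mat p p" and A12: "A12 \<in> carrier_mat p n'" and A21: "A21 \<in> carrier_mat n' p"
    and A22: "A22 \<in> carrier_mat n' n'" and Ah: "Tinv * A * T = four_block_mat A11 A12 A21 A22"
    using spl by auto
  have CT': "C * T = mat p (p + n') (\<lambda>(i, j). if i = j then 1 else 0)" using CT nn by simp
  have iff: "detectable A C \<longleftrightarrow> pbh A22 A12"
    unfolding detectable_iff_pbh[OF A C] pbh_T[OF A C T Ti TTi TiT] Ah CT'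
    by (rule pbh_block[OF A11 A12 A21 A22])
  show ?thesis
  proof
    assume "detectable A C"
    hence P: "pbh A22 A12" using iff by simp
    show "\<exists>L F G. L \<in> carrier_mat (n - p) p \<and> F \<in> carrier_mat (n - p) k \<and> G \<in> carrier_mat k p
       \<and> mrank G = k \<and> ro_pi_observer A12 A22 L F G"
      using construct[OF A12 A22 P, of k] qk rA unfolding n'_def by simp
  next
    assume "\<exists>L F G. L \<in> carrier_mat (n - p) p \<and> F \<in> carrier_mat (n - p) k \<and> G \<in> carrier_mat k p
       \<and> mrank G = k \<and> ro_pi_observer A12 A22 L F G"
    then obtain L F G where L: "L \<in> carrier_mat n' p" and F: "F \<in> carrier_mat n' k"
      and G: "G \<in> carrier_mat k p" and obs: "ro_pi_observer A12 A22 L F G"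
      unfolding n'_def by blast
    have "pbh A22 A12" by (rule necessity[OF A12 A22 L F G obs])
    thus "detectable A C" using iff by simp
  qed
qed

end
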